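(* Let $P$ be a poset with $n$ elements. Then $$K_P(\mathbf x)=\sum_{\alpha\vDash n}\frac{\Psi_\alpha(\mathbf x)}{z_\alpha}\,|\mathcal O^*_\alpha(P)|.$$
   Context: $K_P(\mathbf x)=\sum_f\prod_{x\in P}x_{f(x)}$ over all $f:P\to\mathbb Z_{>0}$ with $x<_Py\Rightarrow f(x)\le f(y)$. For a composition $\alpha=(\alpha_1,\dots,\alpha_\ell)$ of $n$, $\mathcal O^*_\alpha(P)$ is the set of surjections $f:P\to[\ell]$ with $x\le_Py\Rightarrow f(x)\le f(y)$, $|f^{-1}(i)|=\alpha_i$ for all $i$, and each fiber $f^{-1}(i)$ (induced subposet) having a unique minimal element. $S_\alpha=\{\alpha_1,\dots,\alpha_1+\dots+\alpha_{\ell-1}\}$; blocks $B_i(\alpha)$ are the consecutive intervals of $[n]$ of sizes $\alpha_1,\alpha_2,\dots$; $\alpha\le\beta$ iff $S_\beta\subseteq S_\alpha$. $M_\alpha=\sum_{i_1<\dots<i_\ell}x_{i_1}^{\alpha_1}\cdots x_{i_\ell}^{\alpha_\ell}$; $z_\alpha=\prod_i i^{m_i}m_i!$ with $m_i$ the number of parts equal to $i$; $\pi(\gamma)=\prod_i(\gamma_1+\dots+\gamma_i)$; for $\alpha\le\beta$, $\pi(\alpha,\beta)=\prod_{i=1}^{\ell(\beta)}\pi(\alpha^{(i)})$ with $\alpha^{(i)}$ the parts $\alpha_j$ with $B_j(\alpha)\subseteq B_i(\beta)$; $\Psi_\alpha=z_\alpha\sum_{\beta\ge\alpha}\pi(\alpha,\beta)^{-1}M_\beta$.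 *)

theory Defs
  imports Complex_Main "HOL-Library.FuncSet" "HOL-Library.Multiset"
begin

definition poset_on :: "'a set \<Rightarrow> ('a \<Rightarrow> 'a \<Rightarrow> bool) \<Rightarrow> bool" where
  "poset_on P le \<longleftrightarrow>
     (\<forall>x\<in>P. le x x) \<and>
     (\<forall>x\<in>P. \<forall>y\<in>P. le x y \<and> le y x \<longrightarrow> x = y) \<and>
     (\<forall>x\<in>P. \<forall>y\<in>P. \<forall>z\<in>P. le x y \<and> le y z \<longrightarrow> le x z)"

definition compositions :: "nat \<Rightarrow> nat list set" where
  "compositions n = {\<alpha>. sum_list \<alpha> = n \<and> (\<forall>a\<in>set \<alpha>. 0 < a)}"

text \<open>K_P specialised to the variables x_1,...,x_N (all other variables set to 0).\<close>
definition KP :: "'a set \<Rightarrow> ('a \<Rightarrow> 'a \<Rightarrow> bool) \<Rightarrow> nat \<Rightarrow> (nat \<Rightarrow> real) \<Rightarrow> real" where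
  "KP P le N x = (\<Sum>f\<in>{f\<in>P \<rightarrow>\<^sub>E {1..N}. \<forall>p\<in>P. \<forall>q\<in>P. le p q \<and> p \<noteq> q \<longrightarrow> f p \<le> f q}.
                     \<Prod>p\<in>P. x (f p))"

definition Mqs :: "nat list \<Rightarrow> nat \<Rightarrow> (nat \<Rightarrow> real) \<Rightarrow> real" where
  "Mqs \<beta> N x = (\<Sum>i\<in>{i\<in>{0..<length \<beta>} \<rightarrow>\<^sub>E {1..N}. strict_mono_on {0..<length \<beta>} i}.
                    \<Prod>j<length \<beta>. x (i j) ^ (\<beta> ! j))"

definition Sset :: "nat list \<Rightarrow> nat set" where
  "Sset \<alpha> = {sum_list (take i \<alpha>) | i. 1 \<le> i \<and> i < length \<alpha>}"

definition refines :: "nat list \<Rightarrow> nat list \<Rightarrow> bool" where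
  "refines \<alpha> \<beta> \<longleftrightarrow> Sset \<beta> \<subseteq> Sset \<alpha>"

text \<open>Block B_i(alpha), 0-indexed i: the i-th consecutive interval of [n].\<close>
definition block :: "nat list \<Rightarrow> nat \<Rightarrow> nat set" where
  "block \<alpha> i = {sum_list (take i \<alpha>) + 1 .. sum_list (take (Suc i) \<alpha>)}"

definition zee :: "nat list \<Rightarrow> nat" where
  "zee \<alpha> = (\<Prod>i\<in>set \<alpha>. i ^ count (mset \<alpha>) i * fact (count (mset \<alpha>) i))"

definition piC :: "nat list \<Rightarrow> nat" where
  "piC \<gamma> = (\<Prod>i<length \<gamma>. sum_list (take (Suc i) \<gamma>))"

definition subcomp :: "nat list \<Rightarrow> nat list \<Rightarrow> nat \<Rightarrow> nat list" where
  "subcomp \<alpha> \<beta> i = [\<alpha> ! j. j \<leftarrow> [0..<length \<alpha>], block \<alpha> j \<subseteq> block \<beta> i]"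

definition piAB :: "nat list \<Rightarrow> nat list \<Rightarrow> nat" where
  "piAB \<alpha> \<beta> = (\<Prod>i<length \<beta>. piC (subcomp \<alpha> \<beta> i))"

definition Psi :: "nat list \<Rightarrow> nat \<Rightarrow> (nat \<Rightarrow> real) \<Rightarrow> real" where
  "Psi \<alpha> N x = real (zee \<alpha>) *
     (\<Sum>\<beta>\<in>{\<beta>\<in>compositions (sum_list \<alpha>). refines \<alpha> \<beta>}. Mqs \<beta> N x / real (piAB \<alpha> \<beta>))"

definition unique_min :: "('a \<Rightarrow> 'a \<Rightarrow> bool) \<Rightarrow> 'a set \<Rightarrow> bool" where
  "unique_min le F \<longleftrightarrow> (\<exists>!m. m \<in> F \<and> (\<forall>y\<in>F. le y m \<longrightarrow> y = m))"

definition Ostar :: "'a set \<Rightarrow> ('a \<Rightarrow> 'a \<Rightarrow> bool) \<Rightarrow> nat list \<Rightarrow> ('a \<Rightarrow> nat) set" where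
  "Ostar P le \<alpha> = {f\<in>P \<rightarrow>\<^sub>E {1..length \<alpha>}.
      f ` P = {1..length \<alpha>} \<and>
      (\<forall>p\<in>P. \<forall>q\<in>P. le p q \<longrightarrow> f p \<le> f q) \<and>
      (\<forall>i\<in>{1..length \<alpha>}. card {p\<in>P. f p = i} = \<alpha> ! (i - 1)) \<and>
      (\<forall>i\<in>{1..length \<alpha>}. unique_min le {p\<in>P. f p = i})}"

end

theory Submission
  imports Defs
begin


definition Ogen :: "'a set \<Rightarrow> ('a\<Rightarrow>'a\<Rightarrow>bool) \<Rightarrow> ('a set \<Rightarrow> bool) \<Rightarrow> nat list \<Rightarrow> ('a\<Rightarrow>nat) set" where
 "Ogen Q le R \<alpha> = {f\<in>Q \<rightarrow>\<^sub>E {1..length \<alpha>}. f ` Q = {1..length \<alpha>} \<and>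
      (\<forall>p\<in>Q. \<forall>q\<in>Q. le p q \<longrightarrow> f p \<le> f q) \<and>
      (\<forall>i\<in>{1..length \<alpha>}. card {p\<in>Q. f p = i} = \<alpha> ! (i - 1)) \<and>
      (\<forall>i\<in>{1..length \<alpha>}. R {p\<in>Q. f p = i})}"

lemma Ostar_Ogen: "Ostar P le \<alpha> = Ogen P le (unique_min le) \<alpha>"
  unfolding Ostar_def Ogen_def by simp

lemma finite_Ogen: "finite Q \<Longrightarrow> finite (Ogen Q le R \<alpha>)"
  unfolding Ogen_def by (rule finite_subset[of _ "Q \<rightarrow>\<^sub>E {1..length \<alpha>}"]) (auto intro: finite_PiE)

definition ups :: "'a set \<Rightarrow> ('a\<Rightarrow>'a\<Rightarrow>bool) \<Rightarrow> 'a set set" where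
 "ups Q le = {W. W \<subseteq> Q \<and> (\<forall>p\<in>W. \<forall>q\<in>Q. le p q \<longrightarrow> q \<in> W)}"

lemma finite_ups: "finite Q \<Longrightarrow> finite (ups Q le)"
  unfolding ups_def by (rule finite_subset[of _ "Pow Q"]) auto

definition psiW :: "'a set \<Rightarrow> nat \<Rightarrow> 'a set \<times> ('a\<Rightarrow>nat) \<times> ('a\<Rightarrow>nat) \<Rightarrow> 'a \<Rightarrow> nat" where
  "psiW Q la = (\<lambda>(W,g,h) p. if p \<in> Q then (if p \<in> W then h p + la else g p) else undefined)"

definition phiW :: "'a set \<Rightarrow> nat \<Rightarrow> ('a \<Rightarrow> nat) \<Rightarrow> 'a set \<times> ('a\<Rightarrow>nat) \<times> ('a\<Rightarrow>nat)" where
  "phiW Q la f = ({p\<in>Q. la < f p}, restrict f (Q-{p\<in>Q. la < f p}), restrict (\<lambda>p. f p - la) {p\<in>Q. la < f p})"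

lemma psiW_apply: "psiW Q la (W,g,h) p = (if p \<in> Q then (if p \<in> W then h p + la else g p) else undefined)"
  by (simp add: psiW_def)

lemma phiW_psiW:
  assumes W: "W \<in> ups Q le" and g: "g \<in> Ogen (Q-W) le R \<alpha>" and h: "h \<in> Ogen W le R \<gamma>"
    and la: "la = length \<alpha>"
  shows "phiW Q la (psiW Q la (W,g,h)) = (W,g,h)"
proof -
  define f where "f = psiW Q la (W,g,h)"
  have WQ: "W \<subseteq> Q" using W by (simp add: ups_def)
  have hW: "\<And>p. p \<in> W \<Longrightarrow> 1 \<le> h p" using h by (auto simp: Ogen_def PiE_iff)
  have gW: "\<And>p. p \<in> Q - W \<Longrightarrow> g p \<le> la" using g by (auto simp: Ogen_def PiE_iff la)
  have eqW: "{p\<in>Q. la < f p} = W"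
  proof (intro equalityI subsetI)
    fix p assume "p \<in> {p\<in>Q. la < f p}"
    then show "p \<in> W" using gW[of p] by (auto simp: f_def psiW_apply split: if_splits)
  next
    fix p assume "p \<in> W"
    then show "p \<in> {p\<in>Q. la < f p}" using hW[of p] WQ by (auto simp: f_def psiW_apply)
  qed
  have "restrict f (Q - W) = g"
    using g by (auto simp: Ogen_def PiE_iff restrict_def fun_eq_iff extensional_def f_def psiW_apply)
  moreover have "restrict (\<lambda>p. f p - la) W = h"
    using h WQ by (auto simp: Ogen_def PiE_iff restrict_def fun_eq_iff extensional_def f_def psiW_apply)
  ultimately show ?thesis unfolding f_def[symmetric] phiW_def eqW by simp
qed

lemma psiW_phiW:
  assumes f: "f \<in> Ogen Q le R (\<alpha>@\<gamma>)"
  shows "psiW Q la (phiW Q la f) = f"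
  using f by (auto simp: Ogen_def PiE_iff fun_eq_iff phiW_def psiW_def extensional_def)

lemma psiW_in:
  assumes W: "W \<in> ups Q le" and g: "g \<in> Ogen (Q-W) le R \<alpha>" and h: "h \<in> Ogen W le R \<gamma>"
    and la_def: "la = length \<alpha>"
  shows "psiW Q la (W,g,h) \<in> Ogen Q le R (\<alpha>@\<gamma>)"
proof -
    define f where "f = psiW Q la (W,g,h)"
    have fx: "f p = (if p \<in> Q then (if p \<in> W then h p + la else g p) else undefined)" for p
      by (simp add: f_def psiW_apply)
    have WQ: "W \<subseteq> Q" and Wup: "\<And>p q. p \<in> W \<Longrightarrow> q \<in> Q \<Longrightarrow> le p q \<Longrightarrow> q \<in> W" using W by (auto simp: ups_def)
    have hr: "\<And>p. p \<in> W \<Longrightarrow> h p \<in> {1..length \<gamma>}" using h by (auto simp: Ogen_def PiE_iff)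
    have gr: "\<And>p. p \<in> Q - W \<Longrightarrow> g p \<in> {1..la}" using g by (auto simp: Ogen_def PiE_iff la_def)
    have himg: "h ` W = {1..length \<gamma>}" using h by (auto simp: Ogen_def)
    have gimg: "g ` (Q-W) = {1..la}" using g by (auto simp: Ogen_def la_def)
    have hmono: "\<And>p q. p\<in>W \<Longrightarrow> q\<in>W \<Longrightarrow> le p q \<Longrightarrow> h p \<le> h q" using h by (auto simp: Ogen_def)
    have gmono: "\<And>p q. p\<in>Q-W \<Longrightarrow> q\<in>Q-W \<Longrightarrow> le p q \<Longrightarrow> g p \<le> g q" using g by (auto simp: Ogen_def)
    have hcard: "\<And>i. i\<in>{1..length \<gamma>} \<Longrightarrow> card {p\<in>W. h p = i} = \<gamma> ! (i - 1) \<and> R {p\<in>W. h p = i}"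
      using h by (auto simp: Ogen_def)
    have gcard: "\<And>i. i\<in>{1..la} \<Longrightarrow> card {p\<in>Q-W. g p = i} = \<alpha> ! (i - 1) \<and> R {p\<in>Q-W. g p = i}"
      using g by (auto simp: Ogen_def la_def)
    have len: "length (\<alpha>@\<gamma>) = la + length \<gamma>" by (simp add: la_def)
    have fib1: "{p\<in>Q. f p = i} = {p\<in>Q-W. g p = i}" if "i \<le> la" for i
      using that hr by (force simp: fx)
    have fib2: "{p\<in>Q. f p = i} = {p\<in>W. h p = i - la}" if "la < i" for i
      using that gr WQ by (force simp: fx)
    have frange: "\<forall>p\<in>Q. f p \<in> {1..length (\<alpha>@\<gamma>)}"
    proof
      fix p assume "p \<in> Q"
      then show "f p \<in> {1..length (\<alpha>@\<gamma>)}" using hr[of p] gr[of p] by (cases "p \<in> W") (auto simp: fx len la_def)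
    qed
    have "f \<in> Q \<rightarrow>\<^sub>E {1..length (\<alpha>@\<gamma>)}"
    proof -
      have "f \<in> extensional Q" by (simp add: extensional_def fx)
      then show ?thesis using frange by (simp add: PiE_iff)
    qed
    moreover have "f ` Q = {1..length (\<alpha>@\<gamma>)}"
    proof
      show "f ` Q \<subseteq> {1..length (\<alpha> @ \<gamma>)}" using frange by blast
    next
      show "{1..length (\<alpha> @ \<gamma>)} \<subseteq> f ` Q"
      proof
        fix i assume i: "i \<in> {1..length (\<alpha> @ \<gamma>)}"
        show "i \<in> f ` Q"
        proof (cases "i \<le> la")
          case True
          then obtain p where "p \<in> Q - W" "g p = i" using gimg i by (metis atLeastAtMost_iff imageE)
          then show ?thesis by (force simp: fx)
        next
          case False
          then have "i - la \<in> {1..length \<gamma>}" using i len by auto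
          then obtain p where "p \<in> W" "h p = i - la" using himg by (metis imageE)
          then show ?thesis using False WQ by (force simp: fx)
        qed
      qed
    qed
    moreover have "\<forall>p\<in>Q. \<forall>q\<in>Q. le p q \<longrightarrow> f p \<le> f q"
    proof (intro ballI impI)
      fix p q assume p: "p \<in> Q" and q: "q \<in> Q" and pq: "le p q"
      show "f p \<le> f q"
      proof (cases "p \<in> W")
        case True
        then have "q \<in> W" using Wup q pq by blast
        then show ?thesis using True p q hmono pq by (simp add: fx)
      next
        case False
        show ?thesis
        proof (cases "q \<in> W")
          case True
          then show ?thesis using False p q gr[of p] by (auto simp: fx)
        next
          case False2: False
          then show ?thesis using False p q gmono pq by (simp add: fx)
        qed
      qed
    qed
    moreover have "\<forall>i\<in>{1..length (\<alpha>@\<gamma>)}. card {p\<in>Q. f p = i} = (\<alpha>@\<gamma>) ! (i - 1) \<and> R {p\<in>Q. f p = i}"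
    proof
      fix i assume i: "i \<in> {1..length (\<alpha>@\<gamma>)}"
      show "card {p\<in>Q. f p = i} = (\<alpha>@\<gamma>) ! (i - 1) \<and> R {p\<in>Q. f p = i}"
      proof (cases "i \<le> la")
        case True
        then show ?thesis using fib1[OF True] gcard[of i] i by (auto simp: nth_append la_def)
      next
        case False
        then have "i - la \<in> {1..length \<gamma>}" using i len by auto
        then show ?thesis using fib2[of i] hcard[of "i - la"] False
          by (auto simp: nth_append la_def diff_diff_add add.commute)
      qed
    qed
    ultimately show ?thesis
      unfolding Ogen_def f_def[symmetric] by blast
qed

lemma phiW_in:
  assumes f: "f \<in> Ogen Q le R (\<alpha>@\<gamma>)" and la_def: "la = length \<alpha>"
  shows "phiW Q la f \<in> (SIGMA W:ups Q le. Ogen (Q-W) le R \<alpha> \<times> Ogen W le R \<gamma>)"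
proof -
    define W where "W = {p\<in>Q. la < f p}"
    have len: "length (\<alpha>@\<gamma>) = la + length \<gamma>" by (simp add: la_def)
    have fr: "\<And>p. p \<in> Q \<Longrightarrow> f p \<in> {1..la + length \<gamma>}" using f len by (auto simp: Ogen_def PiE_iff)
    have fimg: "f ` Q = {1..la + length \<gamma>}" using f len by (auto simp: Ogen_def)
    have fmono: "\<And>p q. p\<in>Q \<Longrightarrow> q\<in>Q \<Longrightarrow> le p q \<Longrightarrow> f p \<le> f q" using f by (auto simp: Ogen_def)
    have fcard: "\<And>i. i\<in>{1..la + length \<gamma>} \<Longrightarrow> card {p\<in>Q. f p = i} = (\<alpha>@\<gamma>) ! (i - 1) \<and> R {p\<in>Q. f p = i}"
      using f len by (auto simp: Ogen_def)
    have A: "W \<in> ups Q le"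
      unfolding ups_def W_def using fmono by (auto intro: less_le_trans)
    have B: "restrict f (Q - W) \<in> Ogen (Q - W) le R \<alpha>"
    proof -
      have "restrict f (Q - W) \<in> (Q-W) \<rightarrow>\<^sub>E {1..length \<alpha>}"
        using fr by (auto simp: W_def la_def)
      moreover have "restrict f (Q - W) ` (Q-W) = {1..length \<alpha>}"
      proof
        show "restrict f (Q - W) ` (Q-W) \<subseteq> {1..length \<alpha>}" using fr by (auto simp: W_def la_def)
        show "{1..length \<alpha>} \<subseteq> restrict f (Q - W) ` (Q-W)"
        proof
          fix i assume i: "i \<in> {1..length \<alpha>}"
          then have "i \<in> f ` Q" using fimg by (auto simp: la_def)
          then obtain p where "p \<in> Q" "f p = i" by auto
          then show "i \<in> restrict f (Q - W) ` (Q-W)" using i by (force simp: W_def la_def)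
        qed
      qed
      moreover have "\<forall>p\<in>Q-W. \<forall>q\<in>Q-W. le p q \<longrightarrow> restrict f (Q-W) p \<le> restrict f (Q-W) q"
        using fmono by auto
      moreover have "\<forall>i\<in>{1..length \<alpha>}. card {p\<in>Q-W. restrict f (Q-W) p = i} = \<alpha> ! (i - 1) \<and> R {p\<in>Q-W. restrict f (Q-W) p = i}"
      proof
        fix i assume i: "i \<in> {1..length \<alpha>}"
        have "{p\<in>Q-W. restrict f (Q-W) p = i} = {p\<in>Q. f p = i}" using i by (auto simp: W_def la_def)
        then show "card {p\<in>Q-W. restrict f (Q-W) p = i} = \<alpha> ! (i - 1) \<and> R {p\<in>Q-W. restrict f (Q-W) p = i}"
          using fcard[of i] i by (auto simp: nth_append la_def)
      qed
      ultimately show ?thesis unfolding Ogen_def by blast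
    qed
    have C: "restrict (\<lambda>p. f p - la) W \<in> Ogen W le R \<gamma>"
    proof -
      have "restrict (\<lambda>p. f p - la) W \<in> W \<rightarrow>\<^sub>E {1..length \<gamma>}"
        using fr by (force simp: W_def)
      moreover have "restrict (\<lambda>p. f p - la) W ` W = {1..length \<gamma>}"
      proof
        show "restrict (\<lambda>p. f p - la) W ` W \<subseteq> {1..length \<gamma>}" using fr by (force simp: W_def)
        show "{1..length \<gamma>} \<subseteq> restrict (\<lambda>p. f p - la) W ` W"
        proof
          fix i assume i: "i \<in> {1..length \<gamma>}"
          then have "i + la \<in> f ` Q" using fimg by auto
          then obtain p where "p \<in> Q" "f p = i + la" by auto
          then show "i \<in> restrict (\<lambda>p. f p - la) W ` W" using i by (force simp: W_def)
        qed
      qed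
      moreover have "\<forall>p\<in>W. \<forall>q\<in>W. le p q \<longrightarrow> restrict (\<lambda>p. f p - la) W p \<le> restrict (\<lambda>p. f p - la) W q"
        using fmono by (auto simp: W_def diff_le_mono)
      moreover have "\<forall>i\<in>{1..length \<gamma>}. card {p\<in>W. restrict (\<lambda>p. f p - la) W p = i} = \<gamma> ! (i - 1) \<and> R {p\<in>W. restrict (\<lambda>p. f p - la) W p = i}"
      proof
        fix i assume i: "i \<in> {1..length \<gamma>}"
        have "{p\<in>W. restrict (\<lambda>p. f p - la) W p = i} = {p\<in>Q. f p = i + la}" using i by (auto simp: W_def)
        moreover have "(\<alpha>@\<gamma>) ! (i + la - 1) = \<gamma> ! (i - 1)" using i by (auto simp: nth_append la_def)
        ultimately show "card {p\<in>W. restrict (\<lambda>p. f p - la) W p = i} = \<gamma> ! (i - 1) \<and> R {p\<in>W. restrict (\<lambda>p. f p - la) W p = i}"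
          using fcard[of "i + la"] i by auto
      qed
      ultimately show ?thesis unfolding Ogen_def by blast
    qed
    show ?thesis using A B C unfolding phiW_def W_def[symmetric] by simp
qed

lemma Ogen_append_card:
  assumes "finite Q"
  shows "card (Ogen Q le R (\<alpha>@\<gamma>)) = (\<Sum>W\<in>ups Q le. card (Ogen (Q-W) le R \<alpha>) * card (Ogen W le R \<gamma>))"
proof -
  have "bij_betw (psiW Q (length \<alpha>)) (SIGMA W:ups Q le. Ogen (Q-W) le R \<alpha> \<times> Ogen W le R \<gamma>) (Ogen Q le R (\<alpha>@\<gamma>))"
  proof (rule bij_betw_byWitness[where f'="phiW Q (length \<alpha>)"])
    show "\<forall>a\<in>(SIGMA W:ups Q le. Ogen (Q-W) le R \<alpha> \<times> Ogen W le R \<gamma>). phiW Q (length \<alpha>) (psiW Q (length \<alpha>) a) = a"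
      using phiW_psiW by fastforce
    show "\<forall>a'\<in>Ogen Q le R (\<alpha> @ \<gamma>). psiW Q (length \<alpha>) (phiW Q (length \<alpha>) a') = a'"
      using psiW_phiW by blast
    show "psiW Q (length \<alpha>) ` (SIGMA W:ups Q le. Ogen (Q - W) le R \<alpha> \<times> Ogen W le R \<gamma>) \<subseteq> Ogen Q le R (\<alpha> @ \<gamma>)"
      using psiW_in by fastforce
    show "phiW Q (length \<alpha>) ` Ogen Q le R (\<alpha> @ \<gamma>) \<subseteq> (SIGMA W:ups Q le. Ogen (Q - W) le R \<alpha> \<times> Ogen W le R \<gamma>)"
      using phiW_in by blast
  qed
  then have "card (Ogen Q le R (\<alpha>@\<gamma>)) = card (SIGMA W:ups Q le. Ogen (Q-W) le R \<alpha> \<times> Ogen W le R \<gamma>)"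
    by (simp add: bij_betw_same_card)
  also have "\<dots> = (\<Sum>W\<in>ups Q le. card (Ogen (Q-W) le R \<alpha> \<times> Ogen W le R \<gamma>))"
  proof (intro card_SigmaI ballI)
    show "finite (ups Q le)" using assms by (rule finite_ups)
    fix W assume "W \<in> ups Q le"
    then have "W \<subseteq> Q" by (simp add: ups_def)
    then have "finite W" using assms finite_subset by blast
    then show "finite (Ogen (Q-W) le R \<alpha> \<times> Ogen W le R \<gamma>)"
      using assms by (intro finite_cartesian_product finite_Ogen) auto
  qed
  also have "\<dots> = (\<Sum>W\<in>ups Q le. card (Ogen (Q-W) le R \<alpha>) * card (Ogen W le R \<gamma>))"
    by (simp add: card_cartesian_product)
  finally show ?thesis .
qed



lemma length_le_sum_list: "\<forall>a\<in>set xs. 0 < (a::nat) \<Longrightarrow> length xs \<le> sum_list xs"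
  by (induction xs) auto

lemma finite_compositions: "finite (compositions m)"
proof (rule finite_subset)
  show "compositions m \<subseteq> {xs. set xs \<subseteq> {0..m} \<and> length xs \<le> m}"
  proof
    fix xs assume "xs \<in> compositions m"
    then have "sum_list xs = m" "\<forall>a\<in>set xs. 0 < a" by (auto simp: compositions_def)
    then show "xs \<in> {xs. set xs \<subseteq> {0..m} \<and> length xs \<le> m}"
      using length_le_sum_list[of xs] member_le_sum_list[of _ xs] by auto
  qed
  show "finite {xs. set xs \<subseteq> {0..m} \<and> length xs \<le> m}"
    by (rule finite_lists_length_le) simp
qed

lemma compositions_0: "compositions 0 = {[]}"
proof -
  have "x = []" if "sum_list x = 0" "\<forall>a\<in>set x. 0 < (a::nat)" for x
    using that by (cases x) auto
  then show ?thesis unfolding compositions_def by auto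
qed

lemma sum_compositions_snoc:
  assumes "0 < m"
  shows "(\<Sum>\<gamma>\<in>compositions m. F \<gamma>) = (\<Sum>c\<in>{1..m}. \<Sum>\<gamma>'\<in>compositions (m-c). F (\<gamma>'@[c]))"
proof -
  have "(\<Sum>c\<in>{1..m}. \<Sum>\<gamma>'\<in>compositions (m-c). F (\<gamma>'@[c])) = (\<Sum>(c,\<gamma>')\<in>(SIGMA c:{1..m}. compositions (m-c)). F (\<gamma>'@[c]))"
    by (rule sum.Sigma) (auto simp: finite_compositions)
  also have "\<dots> = (\<Sum>\<gamma>\<in>compositions m. F \<gamma>)"
  proof (rule sum.reindex_bij_witness[where j="\<lambda>(c,\<gamma>'). \<gamma>'@[c]" and i="\<lambda>\<gamma>. (last \<gamma>, butlast \<gamma>)"])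
    fix a assume "a \<in> (SIGMA c:{1..m}. compositions (m-c))"
    then obtain c \<gamma>' where a: "a = (c,\<gamma>')" and c: "c \<in> {1..m}" and g: "\<gamma>' \<in> compositions (m-c)" by auto
    show "(\<lambda>\<gamma>. (last \<gamma>, butlast \<gamma>)) ((\<lambda>(c,\<gamma>'). \<gamma>'@[c]) a) = a" using a by simp
    show "(\<lambda>(c,\<gamma>'). \<gamma>'@[c]) a \<in> compositions m" using a c g by (auto simp: compositions_def)
    show "F ((\<lambda>(c,\<gamma>'). \<gamma>'@[c]) a) = (case a of (c,\<gamma>') \<Rightarrow> F (\<gamma>'@[c]))" using a by simp
  next
    fix b assume b: "b \<in> compositions m"
    then have "b \<noteq> []" using assms by (auto simp: compositions_def)
    then have bb: "b = butlast b @ [last b]" by simp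
    show "(\<lambda>(c,\<gamma>'). \<gamma>'@[c]) ((\<lambda>\<gamma>. (last \<gamma>, butlast \<gamma>)) b) = b" using bb by simp
    have "sum_list b = sum_list (butlast b) + last b" using bb by (metis sum_list_append sum_list_simps add.commute add_0 )
    moreover have "0 < last b" "\<forall>a\<in>set (butlast b). 0 < a" using b \<open>b \<noteq> []\<close> by (auto simp: compositions_def dest: in_set_butlastD)
    ultimately show "(\<lambda>\<gamma>. (last \<gamma>, butlast \<gamma>)) b \<in> (SIGMA c:{1..m}. compositions (m-c))"
      using b by (auto simp: compositions_def)
  qed
  finally show ?thesis by simp
qed

lemma piC_snoc: "piC (\<gamma>@[c]) = piC \<gamma> * (sum_list \<gamma> + c)"
proof -
  have "(\<Prod>i<length \<gamma>. sum_list (take (Suc i) (\<gamma>@[c]))) = (\<Prod>i<length \<gamma>. sum_list (take (Suc i) \<gamma>))"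
    by (intro prod.cong) auto
  then show ?thesis unfolding piC_def by (simp add: lessThan_Suc mult.commute)
qed

lemma card_Ogen_sum:
  assumes "finite W" "f \<in> Ogen W le R \<gamma>"
  shows "card W = sum_list \<gamma>"
proof -
  have fr: "f ` W \<subseteq> {1..length \<gamma>}" using assms(2) by (auto simp: Ogen_def)
  have "card W = (\<Sum>i\<in>{1..length \<gamma>}. card {p\<in>W. f p = i})"
    using sum.group[OF assms(1) _ fr, of "\<lambda>_. 1::nat"] by simp
  also have "\<dots> = (\<Sum>i\<in>{1..length \<gamma>}. \<gamma> ! (i - 1))"
    using assms(2) by (intro sum.cong) (auto simp: Ogen_def)
  also have "\<dots> = (\<Sum>i<length \<gamma>. \<gamma> ! i)"
    by (rule sum.reindex_bij_witness[where i=Suc and j="\<lambda>i. i - 1"]) auto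
  also have "\<dots> = sum_list \<gamma>" by (simp add: sum_list_sum_nth atLeast0LessThan)
  finally show ?thesis .
qed

lemma Ogen_nil: "card (Ogen Q le R []) = (if Q = {} then 1 else 0)"
proof -
  have "Ogen Q le R [] = (if Q = {} then {\<lambda>_. undefined} else {})"
    by (auto simp: Ogen_def PiE_iff extensional_def fun_eq_iff)
  then show ?thesis by simp
qed

lemma Ogen_single:
  assumes "0 < c" "finite W"
  shows "card (Ogen W le R [c]) = (if card W = c \<and> R W then 1 else 0)"
proof -
  have "Ogen W le R [c] = (if card W = c \<and> R W then {restrict (\<lambda>_. 1) W} else {})"
  proof (cases "card W = c \<and> R W")
    case True
    then have "W \<noteq> {}" using assms by auto
    then show ?thesis using True by (auto simp: Ogen_def PiE_iff extensional_def fun_eq_iff)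
  next
    case False
    have "f \<notin> Ogen W le R [c]" for f
    proof
      assume f: "f \<in> Ogen W le R [c]"
      then have "\<forall>p\<in>W. f p = 1" by (auto simp: Ogen_def PiE_iff)
      then have "{p\<in>W. f p = 1} = W" by auto
      then show False using f False by (auto simp: Ogen_def)
    qed
    then show ?thesis using False by auto
  qed
  then show ?thesis by simp
qed



lemma poset_on_subset: "poset_on W le \<Longrightarrow> V \<subseteq> W \<Longrightarrow> poset_on V le"
  unfolding poset_on_def by blast

lemma exists_minimal_below:
  assumes "finite U" "poset_on W le" "U \<subseteq> W" "y \<in> U"
  shows "\<exists>z\<in>U. le z y \<and> (\<forall>w\<in>U. le w z \<longrightarrow> w = z)"
proof -
  have P: "poset_on U le" using assms poset_on_subset by blast
  have refl: "\<And>x. x \<in> U \<Longrightarrow> le x x" using P unfolding poset_on_def by blast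
  have antis: "\<And>x y. x\<in>U \<Longrightarrow> y\<in>U \<Longrightarrow> le x y \<Longrightarrow> le y x \<Longrightarrow> x = y"
    using P unfolding poset_on_def by blast
  have trans: "\<And>x y z. x\<in>U \<Longrightarrow> y\<in>U \<Longrightarrow> z\<in>U \<Longrightarrow> le x y \<Longrightarrow> le y z \<Longrightarrow> le x z"
    using P unfolding poset_on_def by blast
  have "\<exists>z. (z \<in> U \<and> le z y) \<and> (\<forall>z'. z' \<in> U \<and> le z' y \<longrightarrow> card {v\<in>U. le v z} \<le> card {v\<in>U. le v z'})"
    by (rule ex_has_least_nat[of "\<lambda>z. z \<in> U \<and> le z y" y]) (simp add: assms(4) refl)
  then obtain z where z: "z \<in> U" "le z y" and zmin: "\<And>z'. z' \<in> U \<Longrightarrow> le z' y \<Longrightarrow> card {v\<in>U. le v z} \<le> card {v\<in>U. le v z'}"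
    by blast
  have "\<forall>w\<in>U. le w z \<longrightarrow> w = z"
  proof (intro ballI impI)
    fix w assume w: "w \<in> U" "le w z"
    have "le w y" using trans[OF w(1) z(1) assms(4) w(2) z(2)] .
    then have c1: "card {v\<in>U. le v z} \<le> card {v\<in>U. le v w}" using zmin w(1) by blast
    have sub: "{v\<in>U. le v w} \<subseteq> {v\<in>U. le v z}"
    proof
      fix v assume "v \<in> {v\<in>U. le v w}"
      then show "v \<in> {v\<in>U. le v z}" using trans[of v w z] w z by blast
    qed
    have fin: "finite {v\<in>U. le v z}" using assms(1) by simp
    have c2: "card {v\<in>U. le v w} \<le> card {v\<in>U. le v z}" by (rule card_mono[OF fin sub])
    have "{v\<in>U. le v w} = {v\<in>U. le v z}"
      by (rule card_subset_eq[OF fin sub]) (use c1 c2 in linarith)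
    moreover have "z \<in> {v\<in>U. le v z}" using refl z by blast
    ultimately have "le z w" by blast
    then show "w = z" using antis w z by blast
  qed
  then show ?thesis using z by blast
qed

lemma um_count:
  assumes "finite W" "poset_on W le"
  shows "card {U\<in>ups W le. unique_min le U} = card W"
proof -
  have refl: "\<And>x. x \<in> W \<Longrightarrow> le x x" using assms(2) unfolding poset_on_def by blast
  have antis: "\<And>x y. x\<in>W \<Longrightarrow> y\<in>W \<Longrightarrow> le x y \<Longrightarrow> le y x \<Longrightarrow> x = y"
    using assms(2) unfolding poset_on_def by blast
  have trans: "\<And>x y z. x\<in>W \<Longrightarrow> y\<in>W \<Longrightarrow> z\<in>W \<Longrightarrow> le x y \<Longrightarrow> le y z \<Longrightarrow> le x z"
    using assms(2) unfolding poset_on_def by blast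
  have "bij_betw (\<lambda>u. {q\<in>W. le u q}) W {U\<in>ups W le. unique_min le U}"
  proof (rule bij_betwI')
    fix u v
    assume uv: "u \<in> W" "v \<in> W"
    show "({q\<in>W. le u q} = {q\<in>W. le v q}) = (u = v)"
    proof
      assume eq: "{q\<in>W. le u q} = {q\<in>W. le v q}"
      have "u \<in> {q\<in>W. le v q}" using eq refl uv by blast
      moreover have "v \<in> {q\<in>W. le u q}" using eq refl uv by blast
      ultimately show "u = v" using antis uv by blast
    qed simp
  next
    fix u assume u: "u \<in> W"
    have "{q\<in>W. le u q} \<in> ups W le" unfolding ups_def using trans u by blast
    moreover have "unique_min le {q\<in>W. le u q}"
      unfolding unique_min_def
    proof
      show "u \<in> {q\<in>W. le u q} \<and> (\<forall>y\<in>{q\<in>W. le u q}. le y u \<longrightarrow> y = u)"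
        using u refl antis by blast
      fix m assume "m \<in> {q\<in>W. le u q} \<and> (\<forall>y\<in>{q\<in>W. le u q}. le y m \<longrightarrow> y = m)"
      then show "m = u" using u refl by blast
    qed
    ultimately show "{q\<in>W. le u q} \<in> {U\<in>ups W le. unique_min le U}" by blast
  next
    fix U assume U: "U \<in> {U\<in>ups W le. unique_min le U}"
    then have UW: "U \<subseteq> W" and Uup: "\<And>p q. p\<in>U \<Longrightarrow> q\<in>W \<Longrightarrow> le p q \<Longrightarrow> q\<in>U"
      by (auto simp: ups_def)
    from U obtain m where m: "m \<in> U" "\<forall>y\<in>U. le y m \<longrightarrow> y = m"
      and muniq: "\<And>m'. m' \<in> U \<and> (\<forall>y\<in>U. le y m' \<longrightarrow> y = m') \<Longrightarrow> m' = m"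
      unfolding unique_min_def by blast
    have fU: "finite U" using UW assms(1) finite_subset by blast
    have "U = {q\<in>W. le m q}"
    proof
      show "{q\<in>W. le m q} \<subseteq> U" using Uup m by blast
      show "U \<subseteq> {q\<in>W. le m q}"
      proof
        fix y assume y: "y \<in> U"
        obtain z where z: "z \<in> U" "le z y" "\<forall>w\<in>U. le w z \<longrightarrow> w = z"
          using exists_minimal_below[OF fU assms(2) UW y] by blast
        then have "z = m" using muniq[of z] by blast
        then show "y \<in> {q\<in>W. le m q}" using z y UW by blast
      qed
    qed
    then show "\<exists>u\<in>W. U = {q\<in>W. le u q}" using m UW by blast
  qed
  then show ?thesis by (simp add: bij_betw_same_card)
qed

lemma sumO_piC:
  assumes "finite W" "poset_on W le"
  shows "(\<Sum>\<gamma>\<in>compositions m. real (card (Ogen W le (unique_min le) \<gamma>)) / real (piC \<gamma>)) = (if card W = m then 1 else 0)"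
  using assms
proof (induction m arbitrary: W rule: less_induct)
  case (less m W)
  define Oc where "Oc = (\<lambda>Q \<gamma>. real (card (Ogen Q le (unique_min le) \<gamma>)))"
  show ?case
  proof (cases "card W = m")
    case False
    have "Ogen W le (unique_min le) \<gamma> = {}" if "\<gamma> \<in> compositions m" for \<gamma>
      using card_Ogen_sum[OF less.prems(1)] that False by (auto simp: compositions_def)
    then show ?thesis using False by simp
  next
    case cardW: True
    show ?thesis
    proof (cases "m = 0")
      case True
      then have "W = {}" using cardW less.prems(1) by simp
      then show ?thesis using True by (simp add: compositions_0 Ogen_nil piC_def)
    next
      case False
      then have m0: "0 < m" by simp
      have upsfin: "finite U" if "U \<in> ups W le" for U
        using that less.prems(1) finite_subset by (auto simp: ups_def)
      have "(\<Sum>\<gamma>\<in>compositions m. Oc W \<gamma> / real (piC \<gamma>))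
          = (\<Sum>c\<in>{1..m}. \<Sum>\<gamma>'\<in>compositions (m-c). Oc W (\<gamma>'@[c]) / real (piC (\<gamma>'@[c])))"
        by (rule sum_compositions_snoc[OF m0])
      also have "\<dots> = (\<Sum>c\<in>{1..m}. \<Sum>\<gamma>'\<in>compositions (m-c). \<Sum>U\<in>ups W le. (Oc U [c] / m) * (Oc (W-U) \<gamma>' / real (piC \<gamma>')))"
      proof (intro sum.cong refl)
        fix c \<gamma>' assume c: "c \<in> {1..m}" and g: "\<gamma>' \<in> compositions (m-c)"
        have "piC (\<gamma>'@[c]) = piC \<gamma>' * m" using c g by (simp add: piC_snoc compositions_def)
        moreover have "Oc W (\<gamma>'@[c]) = (\<Sum>U\<in>ups W le. Oc (W-U) \<gamma>' * Oc U [c])"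
          unfolding Oc_def using Ogen_append_card[OF less.prems(1)] by simp
        ultimately show "Oc W (\<gamma>'@[c]) / real (piC (\<gamma>'@[c])) = (\<Sum>U\<in>ups W le. (Oc U [c] / m) * (Oc (W-U) \<gamma>' / real (piC \<gamma>')))"
          by (simp add: sum_divide_distrib mult.commute)
      qed
      also have "\<dots> = (\<Sum>c\<in>{1..m}. \<Sum>U\<in>ups W le. (Oc U [c] / m) * (\<Sum>\<gamma>'\<in>compositions (m-c). Oc (W-U) \<gamma>' / real (piC \<gamma>')))"
        by (simp add: sum_distrib_left sum.swap[where A="compositions _"])
      also have "\<dots> = (\<Sum>c\<in>{1..m}. \<Sum>U\<in>ups W le. (Oc U [c] / m) * (if card (W-U) = m - c then 1 else 0))"
      proof (intro sum.cong refl)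
        fix c U assume c: "c \<in> {1..m}" and U: "U \<in> ups W le"
        have "poset_on (W-U) le" using less.prems(2) poset_on_subset by blast
        then show "(Oc U [c] / m) * (\<Sum>\<gamma>'\<in>compositions (m-c). Oc (W-U) \<gamma>' / real (piC \<gamma>')) = (Oc U [c] / m) * (if card (W-U) = m - c then 1 else 0)"
          unfolding Oc_def using less.IH[of "m - c" "W - U"] c less.prems(1) by simp
      qed
      also have "\<dots> = (\<Sum>c\<in>{1..m}. \<Sum>U\<in>ups W le. (if c = card U then (if unique_min le U then 1 / real m else 0) else 0))"
      proof (intro sum.cong refl)
        fix c U assume c: "c \<in> {1..m}" and U: "U \<in> ups W le"
        have fU: "finite U" using upsfin U .
        have UW: "U \<subseteq> W" using U by (simp add: ups_def)
        have "Oc U [c] = (if card U = c \<and> unique_min le U then 1 else 0)"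
          unfolding Oc_def using Ogen_single[of c U] c fU by simp
        moreover have "card U = c \<Longrightarrow> card (W - U) = m - c"
          using card_Diff_subset[OF fU UW] cardW by simp
        ultimately show "(Oc U [c] / m) * (if card (W-U) = m - c then 1 else 0) = (if c = card U then (if unique_min le U then 1 / real m else 0) else 0)"
          by auto
      qed
      also have "\<dots> = (\<Sum>U\<in>ups W le. \<Sum>c\<in>{1..m}. (if c = card U then (if unique_min le U then 1 / real m else 0) else 0))"
        by (rule sum.swap)
      also have "\<dots> = (\<Sum>U\<in>ups W le. (if unique_min le U then 1 / real m else 0))"
      proof (intro sum.cong refl)
        fix U assume U: "U \<in> ups W le"
        have fU: "finite U" using upsfin U .
        have UW: "U \<subseteq> W" using U by (simp add: ups_def)
        have "unique_min le U \<Longrightarrow> card U \<in> {1..m}"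
          using card_mono[OF less.prems(1) UW] cardW fU by (auto simp: unique_min_def card_gt_0_iff Suc_le_eq)
        then show "(\<Sum>c\<in>{1..m}. (if c = card U then (if unique_min le U then 1 / real m else 0) else 0)) = (if unique_min le U then 1 / real m else 0)"
          by (auto simp: sum.delta')
      qed
      also have "\<dots> = real (card {U\<in>ups W le. unique_min le U}) / real m"
      proof -
        have "(\<Sum>U\<in>ups W le. (if unique_min le U then 1 / real m else 0)) = (\<Sum>U\<in>{U\<in>ups W le. unique_min le U}. 1 / real m)"
          by (rule sum.inter_filter[symmetric]) (rule finite_ups[OF less.prems(1)])
        then show ?thesis by simp
      qed
      also have "\<dots> = 1" using um_count[OF less.prems] cardW m0 by simp
      finally show ?thesis using cardW unfolding Oc_def by simp
    qed
  qed
qed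



definition ps :: "nat list \<Rightarrow> nat \<Rightarrow> nat" where "ps xs i = sum_list (take i xs)"

lemma ps_append: "ps (xs@ys) i = ps xs i + ps ys (i - length xs)"
  by (simp add: ps_def)

lemma ps_le_sum: "ps xs i \<le> sum_list xs"
proof -
  have "sum_list xs = sum_list (take i xs) + sum_list (drop i xs)"
    by (metis append_take_drop_id sum_list_append)
  then show ?thesis by (simp add: ps_def)
qed

lemma ps_Suc: "i < length xs \<Longrightarrow> ps xs (Suc i) = ps xs i + xs ! i"
  by (simp add: ps_def take_Suc_conv_app_nth)

lemma ps_0[simp]: "ps xs 0 = 0" by (simp add: ps_def)

lemma ps_len: "length xs \<le> i \<Longrightarrow> ps xs i = sum_list xs" by (simp add: ps_def)

lemma ps_mono: "i \<le> j \<Longrightarrow> ps xs i \<le> ps xs j"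
proof -
  assume "i \<le> j"
  then have "take j xs = take i xs @ take (j - i) (drop i xs)"
    by (metis le_add_diff_inverse take_add)
  then show ?thesis by (simp add: ps_def)
qed

lemma ps_strict: "\<forall>a\<in>set xs. 0 < a \<Longrightarrow> i < j \<Longrightarrow> i < length xs \<Longrightarrow> ps xs i < ps xs j"
proof -
  assume pos: "\<forall>a\<in>set xs. 0 < a" and ij: "i < j" and il: "i < length xs"
  have "ps xs i < ps xs (Suc i)" using ps_Suc[OF il] pos il by simp
  also have "\<dots> \<le> ps xs j" using ij ps_mono by simp
  finally show ?thesis .
qed

definition PS :: "nat list \<Rightarrow> nat set" where "PS xs = ps xs ` {0..length xs}"

lemma Sset_ps: "Sset \<alpha> = ps \<alpha> ` {1..<length \<alpha>}"
  unfolding Sset_def ps_def by auto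

lemma Sset_PS:
  assumes "\<forall>a\<in>set \<alpha>. 0 < a"
  shows "Sset \<alpha> = PS \<alpha> - {0, sum_list \<alpha>}"
proof
  show "Sset \<alpha> \<subseteq> PS \<alpha> - {0, sum_list \<alpha>}"
  proof
    fix x assume "x \<in> Sset \<alpha>"
    then obtain i where i: "1 \<le> i" "i < length \<alpha>" "x = ps \<alpha> i" by (auto simp: Sset_ps)
    have "\<alpha> \<noteq> []" using i by auto
    then have "0 < x" using ps_strict[OF assms, of 0 i] i by simp
    moreover have "x < sum_list \<alpha>" using ps_strict[OF assms, of i "length \<alpha>"] i by (simp add: ps_len)
    ultimately show "x \<in> PS \<alpha> - {0, sum_list \<alpha>}" using i by (auto simp: PS_def)
  qed
next
  show "PS \<alpha> - {0, sum_list \<alpha>} \<subseteq> Sset \<alpha>"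
  proof
    fix x assume "x \<in> PS \<alpha> - {0, sum_list \<alpha>}"
    then obtain i where i: "i \<le> length \<alpha>" "x = ps \<alpha> i" "x \<noteq> 0" "x \<noteq> sum_list \<alpha>" by (auto simp: PS_def)
    then have "i \<noteq> 0" "i \<noteq> length \<alpha>" by (metis ps_0, metis ps_len order_refl)
    then show "x \<in> Sset \<alpha>" using i by (auto simp: Sset_ps)
  qed
qed

lemma PS_0: "0 \<in> PS xs" unfolding PS_def by (rule image_eqI[of _ _ 0]) auto
lemma PS_sum: "sum_list xs \<in> PS xs" unfolding PS_def by (rule image_eqI[of _ _ "length xs"]) (auto simp: ps_len)
lemma PS_le: "x \<in> PS xs \<Longrightarrow> x \<le> sum_list xs" unfolding PS_def using ps_le_sum by auto

lemma refines_PS: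
  assumes "\<forall>a\<in>set \<alpha>. 0 < a" "\<forall>a\<in>set \<beta>. 0 < a" "sum_list \<alpha> = sum_list \<beta>"
  shows "refines \<alpha> \<beta> \<longleftrightarrow> PS \<beta> \<subseteq> PS \<alpha>"
  unfolding refines_def Sset_PS[OF assms(1)] Sset_PS[OF assms(2)] assms(3)
  using PS_0[of \<alpha>] PS_sum[of \<alpha>] assms(3) by auto

lemma PS_append: "PS (xs@ys) = PS xs \<union> (\<lambda>t. sum_list xs + t) ` PS ys"
proof
  show "PS (xs@ys) \<subseteq> PS xs \<union> (\<lambda>t. sum_list xs + t) ` PS ys"
  proof
    fix x assume "x \<in> PS (xs@ys)"
    then obtain i where i: "i \<le> length xs + length ys" "x = ps (xs@ys) i" by (auto simp: PS_def)
    show "x \<in> PS xs \<union> (\<lambda>t. sum_list xs + t) ` PS ys"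
    proof (cases "i \<le> length xs")
      case True
      then show ?thesis using i by (auto simp: ps_append PS_def)
    next
      case False
      then have "x = sum_list xs + ps ys (i - length xs)" using i by (simp add: ps_append ps_len)
      moreover have "i - length xs \<in> {0..length ys}" using i by auto
      ultimately show ?thesis by (auto simp: PS_def)
    qed
  qed
next
  show "PS xs \<union> (\<lambda>t. sum_list xs + t) ` PS ys \<subseteq> PS (xs@ys)"
  proof
    fix x assume "x \<in> PS xs \<union> (\<lambda>t. sum_list xs + t) ` PS ys"
    then show "x \<in> PS (xs@ys)"
    proof
      assume "x \<in> PS xs"
      then obtain i where i: "i \<le> length xs" "x = ps xs i" by (auto simp: PS_def)
      then have "x = ps (xs@ys) i" by (simp add: ps_append)
      then show ?thesis using i by (auto simp: PS_def)
    next
      assume "x \<in> (\<lambda>t. sum_list xs + t) ` PS ys"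
      then obtain t where t: "t \<le> length ys" "x = sum_list xs + ps ys t" by (auto simp: PS_def)
      then have "x = ps (xs@ys) (length xs + t)" by (simp add: ps_append ps_len)
      then show ?thesis using t by (auto simp: PS_def)
    qed
  qed
qed

lemma refines_snoc_iff:
  assumes a: "\<alpha>' \<in> compositions m'" and g: "\<gamma> \<in> compositions b" and bb: "\<beta>' \<in> compositions m'" and b0: "0 < b"
  shows "refines (\<alpha>'@\<gamma>) (\<beta>'@[b]) \<longleftrightarrow> refines \<alpha>' \<beta>'"
proof -
  have pa: "\<forall>x\<in>set \<alpha>'. 0 < x" "sum_list \<alpha>' = m'" using a by (auto simp: compositions_def)
  have pg: "\<forall>x\<in>set \<gamma>. 0 < x" "sum_list \<gamma> = b" using g by (auto simp: compositions_def)
  have pb: "\<forall>x\<in>set \<beta>'. 0 < x" "sum_list \<beta>' = m'" using bb by (auto simp: compositions_def)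
  have r1: "refines (\<alpha>'@\<gamma>) (\<beta>'@[b]) \<longleftrightarrow> PS (\<beta>'@[b]) \<subseteq> PS (\<alpha>'@\<gamma>)"
    by (rule refines_PS) (use pa pg pb b0 in auto)
  have r2: "refines \<alpha>' \<beta>' \<longleftrightarrow> PS \<beta>' \<subseteq> PS \<alpha>'"
    by (rule refines_PS) (use pa pb in auto)
  have PSb: "PS [b] = {0, b}" by (simp add: PS_def ps_def atLeast0_atMost_Suc insert_commute)
  have e1: "PS (\<beta>'@[b]) = PS \<beta>' \<union> {m' + b}"
    using PS_append[of \<beta>' "[b]"] PSb pb PS_sum[of \<beta>'] by auto
  have e2: "PS (\<alpha>'@\<gamma>) = PS \<alpha>' \<union> (\<lambda>t. m' + t) ` PS \<gamma>"
    using PS_append[of \<alpha>' \<gamma>] pa by simp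
  have "m' + b \<in> (\<lambda>t. m' + t) ` PS \<gamma>" using PS_sum[of \<gamma>] pg by auto
  moreover have "PS \<beta>' \<subseteq> PS \<alpha>' \<union> (\<lambda>t. m' + t) ` PS \<gamma> \<longleftrightarrow> PS \<beta>' \<subseteq> PS \<alpha>'"
  proof
    assume H: "PS \<beta>' \<subseteq> PS \<alpha>' \<union> (\<lambda>t. m' + t) ` PS \<gamma>"
    show "PS \<beta>' \<subseteq> PS \<alpha>'"
    proof
      fix x assume x: "x \<in> PS \<beta>'"
      then have "x \<le> m'" using PS_le pb by fastforce
      moreover have "x \<in> PS \<alpha>' \<or> x \<in> (\<lambda>t. m' + t) ` PS \<gamma>" using H x by blast
      ultimately show "x \<in> PS \<alpha>'" using PS_sum[of \<alpha>'] pa by auto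
    qed
  qed auto
  ultimately show ?thesis using r1 r2 e1 e2 by auto
qed

lemma split_refines_snoc:
  assumes al: "\<alpha> \<in> compositions (m' + b)" and r: "refines \<alpha> (\<beta>'@[b])" and bb: "\<beta>' \<in> compositions m'" and b0: "0 < b"
  shows "\<exists>k. take k \<alpha> \<in> compositions m' \<and> drop k \<alpha> \<in> compositions b"
proof -
  have pa: "\<forall>x\<in>set \<alpha>. 0 < x" "sum_list \<alpha> = m' + b" using al by (auto simp: compositions_def)
  have pb: "\<forall>x\<in>set \<beta>'. 0 < x" "sum_list \<beta>' = m'" using bb by (auto simp: compositions_def)
  have "PS (\<beta>'@[b]) \<subseteq> PS \<alpha>" using r refines_PS[of \<alpha> "\<beta>'@[b]"] pa pb b0 by auto
  moreover have "m' \<in> PS (\<beta>'@[b])" using PS_append[of \<beta>' "[b]"] PS_sum[of \<beta>'] pb by auto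
  ultimately obtain k where k: "k \<le> length \<alpha>" "ps \<alpha> k = m'" by (auto simp: PS_def)
  have "sum_list \<alpha> = sum_list (take k \<alpha>) + sum_list (drop k \<alpha>)"
    by (metis append_take_drop_id sum_list_append)
  then have "sum_list (take k \<alpha>) = m'" "sum_list (drop k \<alpha>) = b" using k pa by (auto simp: ps_def)
  moreover have "\<forall>x\<in>set (take k \<alpha>). 0 < x" "\<forall>x\<in>set (drop k \<alpha>). 0 < x"
    using pa by (auto dest: in_set_takeD in_set_dropD)
  ultimately show ?thesis by (auto simp: compositions_def)
qed



lemma listcomp_filter: "[f x. x \<leftarrow> xs, P x] = map f (filter P xs)"
  by (induction xs) auto

lemma subcomp_alt: "subcomp \<alpha> \<beta> i = map ((!) \<alpha>) (filter (\<lambda>j. block \<alpha> j \<subseteq> block \<beta> i) [0..<length \<alpha>])"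
  unfolding subcomp_def by (rule listcomp_filter)

lemma block_ps: "block \<alpha> j = {ps \<alpha> j + 1 .. ps \<alpha> (Suc j)}"
  by (simp add: block_def ps_def)

lemma upt_split: "[0..<length (\<alpha>'@\<gamma>)] = [0..<length \<alpha>'] @ [length \<alpha>'..<length \<alpha>' + length \<gamma>]"
  using upt_add_eq_append[of 0 "length \<alpha>'" "length \<gamma>"] by simp

lemma block_append_lt: "j < length \<alpha>' \<Longrightarrow> block (\<alpha>'@\<gamma>) j = block \<alpha>' j"
  by (simp add: block_ps ps_append)

lemma block_append_ge: "length \<alpha>' \<le> j \<Longrightarrow>
   block (\<alpha>'@\<gamma>) j = {sum_list \<alpha>' + ps \<gamma> (j - length \<alpha>') + 1 .. sum_list \<alpha>' + ps \<gamma> (Suc j - length \<alpha>')}"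
  by (simp add: block_ps ps_append ps_len)

lemma map_nth_upt_shift: "map ((!) (\<alpha>'@\<gamma>)) [length \<alpha>'..<length \<alpha>' + length \<gamma>] = \<gamma>"
  by (rule nth_equalityI) (auto simp: nth_append)

lemma map_nth_upt_prefix: "map ((!) (\<alpha>'@\<gamma>)) (filter P [0..<length \<alpha>']) = map ((!) \<alpha>') (filter P [0..<length \<alpha>'])"
  by (rule map_cong) (auto simp: nth_append)

lemma subcomp_snoc_lt:
  assumes pa: "\<forall>x\<in>set \<alpha>'. 0<x" and pg: "\<forall>x\<in>set \<gamma>. 0<x" and s: "sum_list \<alpha>' = sum_list \<beta>'" and i: "i < length \<beta>'"
  shows "subcomp (\<alpha>'@\<gamma>) (\<beta>'@[b]) i = subcomp \<alpha>' \<beta>' i"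
proof -
  let ?la = "length \<alpha>'"
  have bb: "block (\<beta>'@[b]) i = block \<beta>' i" using i by (rule block_append_lt)
  have bsub: "block \<beta>' i \<subseteq> {..sum_list \<alpha>'}" using ps_le_sum[of \<beta>' "Suc i"] s by (auto simp: block_ps)
  have f2: "filter (\<lambda>j. block (\<alpha>'@\<gamma>) j \<subseteq> block \<beta>' i) [?la..<?la + length \<gamma>] = []"
  proof (rule filter_False, rule ballI)
    fix j assume j: "j \<in> set [?la..<?la + length \<gamma>]"
    then have j1: "?la \<le> j" "j - ?la < length \<gamma>" by auto
    have "\<gamma> \<noteq> []" using j1 by auto
    then have "0 < ps \<gamma> (Suc j - ?la)" using ps_strict[OF pg, of 0 "Suc j - ?la"] j1 by simp
    moreover have "ps \<gamma> (j - ?la) < ps \<gamma> (Suc j - ?la)" using ps_strict[OF pg, of "j - ?la" "Suc j - ?la"] j1 by simp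
    ultimately have "sum_list \<alpha>' + ps \<gamma> (Suc j - ?la) \<in> block (\<alpha>'@\<gamma>) j"
      "sum_list \<alpha>' < sum_list \<alpha>' + ps \<gamma> (Suc j - ?la)"
      using block_append_ge[OF j1(1), of \<gamma>] by auto
    then show "\<not> block (\<alpha>'@\<gamma>) j \<subseteq> block \<beta>' i" using bsub by fastforce
  qed
  have f1: "filter (\<lambda>j. block (\<alpha>'@\<gamma>) j \<subseteq> block \<beta>' i) [0..<?la] = filter (\<lambda>j. block \<alpha>' j \<subseteq> block \<beta>' i) [0..<?la]"
    by (rule filter_cong) (auto simp: block_append_lt)
  show ?thesis unfolding subcomp_alt bb upt_split filter_append f2 f1
    by (simp add: map_nth_upt_prefix)
qed

lemma subcomp_snoc_last:
  assumes pa: "\<forall>x\<in>set \<alpha>'. 0<x" and pg: "\<forall>x\<in>set \<gamma>. 0<x" and s: "sum_list \<alpha>' = sum_list \<beta>'" and sg: "sum_list \<gamma> = b"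
  shows "subcomp (\<alpha>'@\<gamma>) (\<beta>'@[b]) (length \<beta>') = \<gamma>"
proof -
  let ?la = "length \<alpha>'"
  let ?m = "sum_list \<alpha>'"
  have bb: "block (\<beta>'@[b]) (length \<beta>') = {?m + 1 .. ?m + b}"
    using s by (simp add: block_ps ps_append ps_len ps_def)
  have f1: "filter (\<lambda>j. block (\<alpha>'@\<gamma>) j \<subseteq> {?m + 1 .. ?m + b}) [0..<?la] = []"
  proof (rule filter_False, rule ballI)
    fix j assume "j \<in> set [0..<?la]"
    then have j: "j < ?la" by simp
    have "ps \<alpha>' j < ps \<alpha>' (Suc j)" using ps_strict[OF pa, of j "Suc j"] j by simp
    moreover have "ps \<alpha>' (Suc j) \<le> ?m" by (rule ps_le_sum)
    ultimately have "ps \<alpha>' (Suc j) \<in> block (\<alpha>'@\<gamma>) j" "ps \<alpha>' (Suc j) \<notin> {?m + 1 .. ?m + b}"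
      using block_append_lt[OF j, of \<gamma>] by (auto simp: block_ps)
    then show "\<not> block (\<alpha>'@\<gamma>) j \<subseteq> {?m + 1 .. ?m + b}" by blast
  qed
  have f2: "filter (\<lambda>j. block (\<alpha>'@\<gamma>) j \<subseteq> {?m + 1 .. ?m + b}) [?la..<?la + length \<gamma>] = [?la..<?la + length \<gamma>]"
  proof (rule filter_True, rule ballI)
    fix j assume j: "j \<in> set [?la..<?la + length \<gamma>]"
    then have j1: "?la \<le> j" by auto
    have "ps \<gamma> (Suc j - ?la) \<le> b" using ps_le_sum sg by metis
    then show "block (\<alpha>'@\<gamma>) j \<subseteq> {?m + 1 .. ?m + b}"
      using block_append_ge[OF j1, of \<gamma>] by auto
  qed
  show ?thesis unfolding subcomp_alt bb upt_split filter_append f2 f1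
    by (simp add: map_nth_upt_shift)
qed

lemma piAB_snoc:
  assumes pa: "\<forall>x\<in>set \<alpha>'. 0<x" and pg: "\<forall>x\<in>set \<gamma>. 0<x" and s: "sum_list \<alpha>' = sum_list \<beta>'" and sg: "sum_list \<gamma> = b"
  shows "piAB (\<alpha>'@\<gamma>) (\<beta>'@[b]) = piAB \<alpha>' \<beta>' * piC \<gamma>"
proof -
  have "(\<Prod>i<length \<beta>'. piC (subcomp (\<alpha>'@\<gamma>) (\<beta>'@[b]) i)) = (\<Prod>i<length \<beta>'. piC (subcomp \<alpha>' \<beta>' i))"
    by (rule prod.cong) (auto simp: subcomp_snoc_lt[OF pa pg s])
  then show ?thesis
    unfolding piAB_def using subcomp_snoc_last[OF pa pg s sg] by (simp add: lessThan_Suc mult.commute)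
qed



lemma append_sum_inj:
  assumes "xs@ys = xs'@ys'" "sum_list xs = sum_list (xs'::nat list)" "\<forall>a\<in>set (xs@ys). 0 < a"
  shows "xs = xs' \<and> ys = ys'"
proof -
  obtain us where "xs = xs' @ us \<and> us @ ys = ys' \<or> xs @ us = xs' \<and> ys = us @ ys'"
    using assms(1) append_eq_append_conv2 by blast
  then show ?thesis
  proof
    assume h: "xs = xs' @ us \<and> us @ ys = ys'"
    then have "sum_list us = 0" using assms(2) by simp
    moreover have "\<forall>a\<in>set us. 0 < a" using assms(3) h by auto
    ultimately have "us = []" by (cases us) auto
    then show ?thesis using h by simp
  next
    assume h: "xs @ us = xs' \<and> ys = us @ ys'"
    then have "sum_list us = 0" using assms(2) by auto
    moreover have "\<forall>a\<in>set us. 0 < a" using assms(3) h by auto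
    ultimately have "us = []" by (cases us) auto
    then show ?thesis using h by simp
  qed
qed

lemma refines_nil: "refines [] []" by (simp add: refines_def Sset_def)

lemma sum_refines_snoc:
  assumes bb: "\<beta>' \<in> compositions m'" and b0: "0 < b"
  shows "(\<Sum>\<alpha>\<in>{\<alpha>\<in>compositions (m'+b). refines \<alpha> (\<beta>'@[b])}. G \<alpha>)
       = (\<Sum>\<alpha>'\<in>{\<alpha>'\<in>compositions m'. refines \<alpha>' \<beta>'}. \<Sum>\<gamma>\<in>compositions b. G (\<alpha>'@\<gamma>))"
proof -
  let ?S = "{\<alpha>'\<in>compositions m'. refines \<alpha>' \<beta>'} \<times> compositions b"
  have inj: "inj_on (\<lambda>(x,y). x@y) ?S"
  proof (rule inj_onI, clarify)
    fix a g a2 g2 assume "a \<in> compositions m'" "g \<in> compositions b" "a2 \<in> compositions m'" "g2 \<in> compositions b"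
      and eq: "a @ g = a2 @ g2"
    then have "sum_list a = m'" "sum_list a2 = m'" "\<forall>x\<in>set a. 0 < x" "\<forall>x\<in>set g. 0 < x"
      by (auto simp: compositions_def)
    then have "sum_list a = sum_list a2" "\<forall>x\<in>set (a@g). 0 < x" by auto
    then show "a = a2 \<and> g = g2" using append_sum_inj[OF eq] by blast
  qed
  have img: "(\<lambda>(x,y). x@y) ` ?S = {\<alpha>\<in>compositions (m'+b). refines \<alpha> (\<beta>'@[b])}"
  proof
    show "(\<lambda>(x,y). x@y) ` ?S \<subseteq> {\<alpha>\<in>compositions (m'+b). refines \<alpha> (\<beta>'@[b])}"
    proof (rule image_subsetI)
      fix p assume "p \<in> ?S"
      then obtain a g where p: "p = (a,g)" and a: "a \<in> compositions m'" "refines a \<beta>'" and g: "g \<in> compositions b"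
        by auto
      have "refines (a@g) (\<beta>'@[b])" using refines_snoc_iff[OF a(1) g bb b0] a(2) by simp
      moreover have "a@g \<in> compositions (m'+b)" using a(1) g unfolding compositions_def by auto
      ultimately show "(\<lambda>(x,y). x@y) p \<in> {\<alpha>\<in>compositions (m'+b). refines \<alpha> (\<beta>'@[b])}" using p by simp
    qed
  next
    show "{\<alpha>\<in>compositions (m'+b). refines \<alpha> (\<beta>'@[b])} \<subseteq> (\<lambda>(x,y). x@y) ` ?S"
    proof
      fix \<alpha> assume a: "\<alpha> \<in> {\<alpha>\<in>compositions (m'+b). refines \<alpha> (\<beta>'@[b])}"
      then obtain k where k: "take k \<alpha> \<in> compositions m'" "drop k \<alpha> \<in> compositions b"
        using split_refines_snoc[OF _ _ bb b0] by blast
      have "refines (take k \<alpha> @ drop k \<alpha>) (\<beta>'@[b])" using a by simp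
      then have "refines (take k \<alpha>) \<beta>'" using refines_snoc_iff[OF k bb b0] by simp
      then have "(take k \<alpha>, drop k \<alpha>) \<in> ?S" using k by simp
      then show "\<alpha> \<in> (\<lambda>(x,y). x@y) ` ?S" by (rule image_eqI[rotated]) simp
    qed
  qed
  have "(\<Sum>\<alpha>\<in>{\<alpha>\<in>compositions (m'+b). refines \<alpha> (\<beta>'@[b])}. G \<alpha>) = (\<Sum>p\<in>?S. G ((\<lambda>(x,y). x@y) p))"
    unfolding img[symmetric] by (rule sum.reindex[OF inj, unfolded comp_def])
  also have "\<dots> = (\<Sum>\<alpha>'\<in>{\<alpha>'\<in>compositions m'. refines \<alpha>' \<beta>'}. \<Sum>\<gamma>\<in>compositions b. G (\<alpha>'@\<gamma>))"
    by (simp add: sum.cartesian_product split_def)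
  finally show ?thesis .
qed

lemma main_O:
  assumes "finite Q" "poset_on Q le" "\<forall>x\<in>set \<beta>. 0 < x"
  shows "real (card (Ogen Q le (\<lambda>_. True) \<beta>)) =
    (\<Sum>\<alpha>\<in>{\<alpha>\<in>compositions (sum_list \<beta>). refines \<alpha> \<beta>}. real (card (Ogen Q le (unique_min le) \<alpha>)) / real (piAB \<alpha> \<beta>))"
  using assms
proof (induction \<beta> arbitrary: Q rule: rev_induct)
  case Nil
  have "{\<alpha>\<in>compositions (sum_list []). refines \<alpha> []} = {[]}"
    by (auto simp: compositions_0 refines_nil)
  then show ?case by (simp add: Ogen_nil piAB_def)
next
  case (snoc b \<beta>' Q)
  define m' where "m' = sum_list \<beta>'"
  have b0: "0 < b" and pb: "\<forall>x\<in>set \<beta>'. 0 < x" using snoc.prems by auto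
  have bb: "\<beta>' \<in> compositions m'" using pb by (simp add: compositions_def m'_def)
  define Os where "Os = (\<lambda>Q \<alpha>. real (card (Ogen Q le (unique_min le) \<alpha>)))"
  define Ot where "Ot = (\<lambda>Q \<alpha>. real (card (Ogen Q le (\<lambda>_. True) \<alpha>)))"
  have upsfin: "finite W" "W \<subseteq> Q" if "W \<in> ups Q le" for W
    using that snoc.prems(1) finite_subset by (auto simp: ups_def)
  have "(\<Sum>\<alpha>\<in>{\<alpha>\<in>compositions (sum_list (\<beta>'@[b])). refines \<alpha> (\<beta>'@[b])}. Os Q \<alpha> / real (piAB \<alpha> (\<beta>'@[b])))
     = (\<Sum>\<alpha>'\<in>{\<alpha>'\<in>compositions m'. refines \<alpha>' \<beta>'}. \<Sum>\<gamma>\<in>compositions b. Os Q (\<alpha>'@\<gamma>) / real (piAB (\<alpha>'@\<gamma>) (\<beta>'@[b])))"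
    using sum_refines_snoc[OF bb b0] by (simp add: m'_def)
  also have "\<dots> = (\<Sum>\<alpha>'\<in>{\<alpha>'\<in>compositions m'. refines \<alpha>' \<beta>'}. \<Sum>\<gamma>\<in>compositions b. \<Sum>W\<in>ups Q le.
          (Os (Q-W) \<alpha>' / real (piAB \<alpha>' \<beta>')) * (Os W \<gamma> / real (piC \<gamma>)))"
  proof (intro sum.cong refl)
    fix \<alpha>' \<gamma> assume a: "\<alpha>' \<in> {\<alpha>'\<in>compositions m'. refines \<alpha>' \<beta>'}" and g: "\<gamma> \<in> compositions b"
    have "piAB (\<alpha>'@\<gamma>) (\<beta>'@[b]) = piAB \<alpha>' \<beta>' * piC \<gamma>"
      using a g by (intro piAB_snoc) (auto simp: compositions_def m'_def)
    moreover have "Os Q (\<alpha>'@\<gamma>) = (\<Sum>W\<in>ups Q le. Os (Q-W) \<alpha>' * Os W \<gamma>)"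
      unfolding Os_def using Ogen_append_card[OF snoc.prems(1)] by simp
    ultimately show "Os Q (\<alpha>'@\<gamma>) / real (piAB (\<alpha>'@\<gamma>) (\<beta>'@[b])) = (\<Sum>W\<in>ups Q le.
          (Os (Q-W) \<alpha>' / real (piAB \<alpha>' \<beta>')) * (Os W \<gamma> / real (piC \<gamma>)))"
      by (simp add: sum_divide_distrib)
  qed
  also have "\<dots> = (\<Sum>W\<in>ups Q le. (\<Sum>\<alpha>'\<in>{\<alpha>'\<in>compositions m'. refines \<alpha>' \<beta>'}. Os (Q-W) \<alpha>' / real (piAB \<alpha>' \<beta>'))
                * (\<Sum>\<gamma>\<in>compositions b. Os W \<gamma> / real (piC \<gamma>)))"
  proof -
    have "(\<Sum>\<alpha>'\<in>{\<alpha>'\<in>compositions m'. refines \<alpha>' \<beta>'}. \<Sum>\<gamma>\<in>compositions b. \<Sum>W\<in>ups Q le.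
          (Os (Q-W) \<alpha>' / real (piAB \<alpha>' \<beta>')) * (Os W \<gamma> / real (piC \<gamma>)))
        = (\<Sum>\<alpha>'\<in>{\<alpha>'\<in>compositions m'. refines \<alpha>' \<beta>'}. \<Sum>W\<in>ups Q le. \<Sum>\<gamma>\<in>compositions b.
          (Os (Q-W) \<alpha>' / real (piAB \<alpha>' \<beta>')) * (Os W \<gamma> / real (piC \<gamma>)))"
      by (rule sum.cong[OF refl], rule sum.swap)
    also have "\<dots> = (\<Sum>W\<in>ups Q le. \<Sum>\<alpha>'\<in>{\<alpha>'\<in>compositions m'. refines \<alpha>' \<beta>'}. \<Sum>\<gamma>\<in>compositions b.
          (Os (Q-W) \<alpha>' / real (piAB \<alpha>' \<beta>')) * (Os W \<gamma> / real (piC \<gamma>)))"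
      by (rule sum.swap)
    also have "\<dots> = (\<Sum>W\<in>ups Q le. (\<Sum>\<alpha>'\<in>{\<alpha>'\<in>compositions m'. refines \<alpha>' \<beta>'}. Os (Q-W) \<alpha>' / real (piAB \<alpha>' \<beta>'))
                * (\<Sum>\<gamma>\<in>compositions b. Os W \<gamma> / real (piC \<gamma>)))"
      by (rule sum.cong[OF refl], rule sum_product[symmetric])
    finally show ?thesis .
  qed
  also have "\<dots> = (\<Sum>W\<in>ups Q le. Ot (Q-W) \<beta>' * Ot W [b])"
  proof (intro sum.cong refl)
    fix W assume W: "W \<in> ups Q le"
    have p1: "poset_on (Q-W) le" "poset_on W le" using snoc.prems(2) upsfin[OF W] poset_on_subset by blast+
    have "(\<Sum>\<alpha>'\<in>{\<alpha>'\<in>compositions m'. refines \<alpha>' \<beta>'}. Os (Q-W) \<alpha>' / real (piAB \<alpha>' \<beta>')) = Ot (Q-W) \<beta>'"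
      using snoc.IH[of "Q-W"] snoc.prems(1) p1 pb unfolding Os_def Ot_def m'_def by simp
    moreover have "(\<Sum>\<gamma>\<in>compositions b. Os W \<gamma> / real (piC \<gamma>)) = Ot W [b]"
      unfolding Os_def Ot_def using sumO_piC[OF upsfin(1)[OF W] p1(2), of b] Ogen_single[OF b0 upsfin(1)[OF W]] by simp
    ultimately show "(\<Sum>\<alpha>'\<in>{\<alpha>'\<in>compositions m'. refines \<alpha>' \<beta>'}. Os (Q-W) \<alpha>' / real (piAB \<alpha>' \<beta>'))
                * (\<Sum>\<gamma>\<in>compositions b. Os W \<gamma> / real (piC \<gamma>)) = Ot (Q-W) \<beta>' * Ot W [b]" by simp
  qed
  also have "\<dots> = Ot Q (\<beta>'@[b])"
    unfolding Ot_def using Ogen_append_card[OF snoc.prems(1)] by simp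
  finally show ?case unfolding Os_def Ot_def by simp
qed



lemma prod_fibers:
  fixes x :: "nat \<Rightarrow> real"
  assumes fin: "finite P" and g: "g \<in> Ogen P le R \<beta>"
  shows "(\<Prod>p\<in>P. x (i (g p - 1))) = (\<Prod>j<length \<beta>. x (i j) ^ (\<beta>!j))"
proof -
  have gr: "g ` P \<subseteq> {1..length \<beta>}" using g by (auto simp: Ogen_def)
  have "(\<Prod>p\<in>P. x (i (g p - 1))) = (\<Prod>k\<in>{1..length \<beta>}. \<Prod>p\<in>{p\<in>P. g p = k}. x (i (g p - 1)))"
    by (rule prod.group[OF fin _ gr, symmetric]) simp
  also have "\<dots> = (\<Prod>k\<in>{1..length \<beta>}. \<Prod>p\<in>{p\<in>P. g p = k}. x (i (k - 1)))"
    by (intro prod.cong refl) auto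
  also have "\<dots> = (\<Prod>k\<in>{1..length \<beta>}. x (i (k - 1)) ^ (\<beta>!(k-1)))"
  proof (intro prod.cong refl)
    fix k assume "k \<in> {1..length \<beta>}"
    then have "card {p\<in>P. g p = k} = \<beta>!(k-1)" using g by (auto simp: Ogen_def)
    then show "(\<Prod>p\<in>{p\<in>P. g p = k}. x (i (k - 1))) = x (i (k - 1)) ^ (\<beta>!(k-1))" by simp
  qed
  also have "\<dots> = (\<Prod>j<length \<beta>. x (i j) ^ (\<beta>!j))"
    by (rule prod.reindex_bij_witness[where i=Suc and j="\<lambda>i. i - 1"]) auto
  finally show ?thesis .
qed

definition Fset :: "'a set \<Rightarrow> ('a \<Rightarrow> 'a \<Rightarrow> bool) \<Rightarrow> nat \<Rightarrow> ('a \<Rightarrow> nat) set" where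
  "Fset P le N = {f\<in>P \<rightarrow>\<^sub>E {1..N}. \<forall>p\<in>P. \<forall>q\<in>P. le p q \<and> p \<noteq> q \<longrightarrow> f p \<le> f q}"

definition Iset :: "nat \<Rightarrow> nat \<Rightarrow> (nat \<Rightarrow> nat) set" where
  "Iset N l = {i\<in>{0..<l} \<rightarrow>\<^sub>E {1..N}. strict_mono_on {0..<l} i}"

definition comp3 :: "'a set \<Rightarrow> nat list \<times> ('a \<Rightarrow> nat) \<times> (nat \<Rightarrow> nat) \<Rightarrow> 'a \<Rightarrow> nat" where
  "comp3 P = (\<lambda>(\<beta>,g,i). restrict (\<lambda>p. i (g p - 1)) P)"

definition sl :: "'a set \<Rightarrow> ('a \<Rightarrow> nat) \<Rightarrow> nat list" where
  "sl P f = sorted_list_of_set (f ` P)"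

definition idx :: "'a set \<Rightarrow> ('a \<Rightarrow> nat) \<Rightarrow> nat \<Rightarrow> nat" where
  "idx P f a = (THE k. k < length (sl P f) \<and> sl P f ! k = a)"

definition fac3 :: "'a set \<Rightarrow> ('a \<Rightarrow> nat) \<Rightarrow> nat list \<times> ('a \<Rightarrow> nat) \<times> (nat \<Rightarrow> nat)" where
  "fac3 P f = (map (\<lambda>k. card {p\<in>P. f p = sl P f ! k}) [0..<length (sl P f)],
               restrict (\<lambda>p. Suc (idx P f (f p))) P,
               restrict (\<lambda>k. sl P f ! k) {0..<length (sl P f)})"

lemma sl_props:
  assumes "finite P"
  shows "set (sl P f) = f ` P" "distinct (sl P f)" "sorted_wrt (<) (sl P f)"
  using assms by (auto simp: sl_def strict_sorted_list_of_set)

lemma idx_props: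
  assumes "finite P" "a \<in> f ` P"
  shows "idx P f a < length (sl P f)" "sl P f ! idx P f a = a"
proof -
  have "\<exists>!k. k < length (sl P f) \<and> sl P f ! k = a"
    by (rule distinct_Ex1) (use sl_props[OF assms(1)] assms(2) in auto)
  from theI'[OF this] show "idx P f a < length (sl P f)" "sl P f ! idx P f a = a"
    unfolding idx_def by auto
qed

lemma idx_nth:
  assumes "finite P" "k < length (sl P f)"
  shows "idx P f (sl P f ! k) = k"
proof -
  have "sl P f ! k \<in> f ` P" using sl_props(1)[OF assms(1)] assms(2) nth_mem by blast
  then have "idx P f (sl P f ! k) < length (sl P f)" "sl P f ! idx P f (sl P f ! k) = sl P f ! k"
    using idx_props[OF assms(1)] by auto
  then show ?thesis using nth_eq_iff_index_eq[OF sl_props(2)[OF assms(1)]] assms(2) by blast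
qed

lemma sl_strict: "finite P \<Longrightarrow> k1 < k2 \<Longrightarrow> k2 < length (sl P f) \<Longrightarrow> sl P f ! k1 < sl P f ! k2"
  using sl_props(3) sorted_wrt_nth_less by blast

lemma sl_le_iff: "finite P \<Longrightarrow> k1 < length (sl P f) \<Longrightarrow> k2 < length (sl P f) \<Longrightarrow> sl P f ! k1 \<le> sl P f ! k2 \<longleftrightarrow> k1 \<le> k2"
  using sl_strict[of P k1 k2 f] sl_strict[of P k2 k1 f] by (cases k1 k2 rule: linorder_cases) auto



lemma comp3_apply: "p \<in> P \<Longrightarrow> comp3 P (\<beta>,g,i) p = i (g p - 1)"
  by (simp add: comp3_def)

lemma fac_comp:
  assumes fin: "finite P" and g: "g \<in> Ogen P le (\<lambda>_. True) \<beta>" and i: "i \<in> Iset N (length \<beta>)"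
  shows "fac3 P (comp3 P (\<beta>,g,i)) = (\<beta>,g,i)"
proof -
  define f where "f = comp3 P (\<beta>,g,i)"
  define l where "l = length \<beta>"
  have fp: "\<And>p. p \<in> P \<Longrightarrow> f p = i (g p - 1)" by (simp add: f_def comp3_apply)
  have gr: "\<And>p. p \<in> P \<Longrightarrow> g p \<in> {1..l}" using g by (auto simp: Ogen_def PiE_iff l_def)
  have gimg: "g ` P = {1..l}" using g by (auto simp: Ogen_def l_def)
  have gext: "g \<in> extensional P" using g by (auto simp: Ogen_def PiE_iff)
  have sm: "strict_mono_on {0..<l} i" and iext: "i \<in> extensional {0..<l}" using i by (auto simp: Iset_def l_def PiE_iff)
  have inj: "inj_on i {0..<l}" using sm strict_mono_on_imp_inj_on by blast
  have img1: "(\<lambda>p. g p - 1) ` P = {0..<l}"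
  proof
    show "(\<lambda>p. g p - 1) ` P \<subseteq> {0..<l}" using gr by force
    show "{0..<l} \<subseteq> (\<lambda>p. g p - 1) ` P"
    proof
      fix k assume k: "k \<in> {0..<l}"
      then have "Suc k \<in> g ` P" using gimg by auto
      then obtain p where "p \<in> P" "g p = Suc k" by auto
      then show "k \<in> (\<lambda>p. g p - 1) ` P" by force
    qed
  qed
  have fimg: "f ` P = i ` {0..<l}"
  proof -
    have "f ` P = i ` ((\<lambda>p. g p - 1) ` P)" using fp by (auto simp: image_image)
    then show ?thesis using img1 by simp
  qed
  have sw: "sorted_wrt (<) (map i [0..<l])"
    unfolding sorted_wrt_iff_nth_less using sm by (auto simp: strict_mono_on_def)
  have slf: "sl P f = map i [0..<l]"
    unfolding sl_def fimg
    using sorted_list_of_set_unique[of "i ` {0..<l}" "map i [0..<l]"] sw card_image[OF inj] by auto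
  have lsl: "length (sl P f) = l" using slf by simp
  have slk: "\<And>k. k < l \<Longrightarrow> sl P f ! k = i k" using slf by simp
  have A: "map (\<lambda>k. card {p\<in>P. f p = sl P f ! k}) [0..<length (sl P f)] = \<beta>"
  proof (rule nth_equalityI)
    show "length (map (\<lambda>k. card {p\<in>P. f p = sl P f ! k}) [0..<length (sl P f)]) = length \<beta>" using lsl l_def by simp
    fix k assume "k < length (map (\<lambda>k. card {p\<in>P. f p = sl P f ! k}) [0..<length (sl P f)])"
    then have k: "k < l" using lsl by simp
    have "{p\<in>P. f p = sl P f ! k} = {p\<in>P. g p = Suc k}"
    proof (intro Collect_cong conj_cong refl)
      fix p assume p: "p \<in> P"
      have "f p = sl P f ! k \<longleftrightarrow> i (g p - 1) = i k" using fp[OF p] slk[OF k] by simp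
      also have "\<dots> \<longleftrightarrow> g p - 1 = k" using inj k gr[OF p] by (auto dest: inj_onD)
      also have "\<dots> \<longleftrightarrow> g p = Suc k" using gr[OF p] by auto
      finally show "f p = sl P f ! k \<longleftrightarrow> g p = Suc k" .
    qed
    moreover have "card {p\<in>P. g p = Suc k} = \<beta> ! k" using g k by (auto simp: Ogen_def l_def)
    ultimately show "map (\<lambda>k. card {p\<in>P. f p = sl P f ! k}) [0..<length (sl P f)] ! k = \<beta> ! k"
      using k lsl by simp
  qed
  have B: "restrict (\<lambda>p. Suc (idx P f (f p))) P = g"
  proof
    fix p show "restrict (\<lambda>p. Suc (idx P f (f p))) P p = g p"
    proof (cases "p \<in> P")
      case True
      have "g p - 1 < l" using gr[OF True] by auto
      then have "idx P f (f p) = g p - 1" using fp[OF True] slk idx_nth[OF fin, of "g p - 1" f] lsl by simp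
      then show ?thesis using True gr[OF True] by simp
    next
      case False
      then show ?thesis using gext by (simp add: extensional_def)
    qed
  qed
  have C: "restrict (\<lambda>k. sl P f ! k) {0..<length (sl P f)} = i"
  proof
    fix k show "restrict (\<lambda>k. sl P f ! k) {0..<length (sl P f)} k = i k"
      using slk iext lsl by (auto simp: extensional_def)
  qed
  show ?thesis using A B C unfolding f_def[symmetric] fac3_def by simp
qed

lemma comp_in:
  assumes fin: "finite P" and g: "g \<in> Ogen P le (\<lambda>_. True) \<beta>" and i: "i \<in> Iset N (length \<beta>)"
  shows "comp3 P (\<beta>,g,i) \<in> Fset P le N"
proof -
  define l where "l = length \<beta>"
  have gr: "\<And>p. p \<in> P \<Longrightarrow> g p \<in> {1..l}" using g by (auto simp: Ogen_def PiE_iff l_def)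
  have gmono: "\<And>p q. p\<in>P \<Longrightarrow> q\<in>P \<Longrightarrow> le p q \<Longrightarrow> g p \<le> g q" using g by (auto simp: Ogen_def)
  have sm: "strict_mono_on {0..<l} i" and ir: "\<And>k. k \<in> {0..<l} \<Longrightarrow> i k \<in> {1..N}" using i by (auto simp: Iset_def l_def PiE_iff)
  have "comp3 P (\<beta>,g,i) \<in> P \<rightarrow>\<^sub>E {1..N}"
  proof -
    have "\<forall>p\<in>P. i (g p - 1) \<in> {1..N}"
    proof
      fix p assume "p \<in> P"
      then have "g p - 1 \<in> {0..<l}" using gr by force
      then show "i (g p - 1) \<in> {1..N}" by (rule ir)
    qed
    then show ?thesis by (auto simp: comp3_def)
  qed
  moreover have "\<forall>p\<in>P. \<forall>q\<in>P. le p q \<and> p \<noteq> q \<longrightarrow> comp3 P (\<beta>,g,i) p \<le> comp3 P (\<beta>,g,i) q"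
  proof (intro ballI impI)
    fix p q assume p: "p \<in> P" and q: "q \<in> P" and pq: "le p q \<and> p \<noteq> q"
    have a: "g p - 1 \<le> g q - 1" using gmono[OF p q] pq by (simp add: diff_le_mono)
    have b: "g p - 1 \<in> {0..<l}" "g q - 1 \<in> {0..<l}" using gr p q by force+
    have "i (g p - 1) \<le> i (g q - 1)"
    proof (cases "g p - 1 = g q - 1")
      case True then show ?thesis by simp
    next
      case False
      then have "g p - 1 < g q - 1" using a by simp
      then show ?thesis using sm b by (auto simp: strict_mono_on_def intro: less_imp_le)
    qed
    then show "comp3 P (\<beta>,g,i) p \<le> comp3 P (\<beta>,g,i) q" using p q by (simp add: comp3_apply)
  qed
  ultimately show ?thesis unfolding Fset_def by blast
qed



lemma comp_fac:
  assumes fin: "finite P" and f: "f \<in> Fset P le N"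
  shows "comp3 P (fac3 P f) = f"
proof
  fix p show "comp3 P (fac3 P f) p = f p"
  proof (cases "p \<in> P")
    case True
    then have "f p \<in> f ` P" by simp
    then show ?thesis using idx_props[OF fin] True by (simp add: comp3_def fac3_def)
  next
    case False
    then show ?thesis using f by (auto simp: comp3_def fac3_def Fset_def PiE_iff extensional_def)
  qed
qed

lemma fac_in:
  assumes fin: "finite P" and f: "f \<in> Fset P le N" and cP: "card P = n"
  shows "fac3 P f \<in> (SIGMA \<beta>:compositions n. Ogen P le (\<lambda>_. True) \<beta> \<times> Iset N (length \<beta>))"
proof -
  define L where "L = sl P f"
  define l where "l = length L"
  define \<beta> where "\<beta> = map (\<lambda>k. card {p\<in>P. f p = L ! k}) [0..<l]"
  define g where "g = restrict (\<lambda>p. Suc (idx P f (f p))) P"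
  define i where "i = restrict (\<lambda>k. L ! k) {0..<l}"
  have fac: "fac3 P f = (\<beta>, g, i)" by (simp add: fac3_def \<beta>_def g_def i_def L_def l_def)
  have setL: "set L = f ` P" and dL: "distinct L" using sl_props[OF fin] by (auto simp: L_def)
  have Lk: "\<And>k. k < l \<Longrightarrow> L ! k \<in> f ` P" using setL nth_mem l_def by blast
  have fr: "\<And>p. p \<in> P \<Longrightarrow> f p \<in> {1..N}" using f by (auto simp: Fset_def PiE_iff)
  have lenb: "length \<beta> = l" by (simp add: \<beta>_def)
  have bk: "\<And>k. k < l \<Longrightarrow> \<beta> ! k = card {p\<in>P. f p = L ! k}" by (simp add: \<beta>_def)
  have idxl: "\<And>p. p \<in> P \<Longrightarrow> idx P f (f p) < l" using idx_props(1)[OF fin] by (simp add: L_def l_def)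
  have idxn: "\<And>p. p \<in> P \<Longrightarrow> L ! idx P f (f p) = f p" using idx_props(2)[OF fin] by (simp add: L_def)
  have idxk: "\<And>k. k < l \<Longrightarrow> idx P f (L ! k) = k" using idx_nth[OF fin] by (simp add: L_def l_def)
  have pos: "\<forall>a\<in>set \<beta>. 0 < a"
  proof
    fix a assume "a \<in> set \<beta>"
    then obtain k where k: "k < l" "a = card {p\<in>P. f p = L ! k}" by (auto simp: \<beta>_def)
    then obtain p where "p \<in> P" "f p = L ! k" using Lk by force
    then have "{p\<in>P. f p = L ! k} \<noteq> {}" by blast
    then show "0 < a" using k fin by (simp add: card_gt_0_iff)
  qed
  have "sum_list \<beta> = (\<Sum>k\<in>{0..<l}. card {p\<in>P. f p = L ! k})"
    by (simp add: \<beta>_def sum_list_sum_nth atLeast0LessThan)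
  also have "\<dots> = (\<Sum>a\<in>set L. card {p\<in>P. f p = a})"
  proof -
    have "inj_on ((!) L) {0..<l}" using dL by (simp add: inj_on_nth l_def)
    moreover have "(!) L ` {0..<l} = set L" by (simp add: l_def atLeast0LessThan set_conv_nth) blast
    ultimately show ?thesis using sum.reindex[of "(!) L" "{0..<l}" "\<lambda>a. card {p\<in>P. f p = a}"] by simp
  qed
  also have "\<dots> = (\<Sum>a\<in>f ` P. \<Sum>p\<in>{p\<in>P. f p = a}. 1)" using setL by simp
  also have "\<dots> = card P" using sum.group[OF fin finite_imageI[OF fin] subset_refl, of "\<lambda>_. 1::nat"] by simp
  finally have "sum_list \<beta> = n" using cP by simp
  then have bC: "\<beta> \<in> compositions n" using pos by (simp add: compositions_def)
  have gp: "\<And>p. p \<in> P \<Longrightarrow> g p = Suc (idx P f (f p))" by (simp add: g_def)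
  have "g \<in> P \<rightarrow>\<^sub>E {1..length \<beta>}" using idxl lenb by (auto simp: g_def Suc_le_eq)
  moreover have "g ` P = {1..length \<beta>}"
  proof
    show "g ` P \<subseteq> {1..length \<beta>}" using idxl lenb by (auto simp: g_def Suc_le_eq)
    show "{1..length \<beta>} \<subseteq> g ` P"
    proof
      fix k assume k: "k \<in> {1..length \<beta>}"
      then have k1: "k - 1 < l" using lenb by auto
      then obtain p where p: "p \<in> P" "f p = L ! (k - 1)" using Lk by force
      then have "g p = k" using gp idxk[OF k1] k by simp
      then show "k \<in> g ` P" using p by force
    qed
  qed
  moreover have "\<forall>p\<in>P. \<forall>q\<in>P. le p q \<longrightarrow> g p \<le> g q"
  proof (intro ballI impI)
    fix p q assume p: "p \<in> P" and q: "q \<in> P" and pq: "le p q"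
    show "g p \<le> g q"
    proof (cases "p = q")
      case True then show ?thesis by simp
    next
      case False
      then have "f p \<le> f q" using f p q pq by (auto simp: Fset_def)
      then have "L ! idx P f (f p) \<le> L ! idx P f (f q)" using idxn p q by simp
      then have "idx P f (f p) \<le> idx P f (f q)"
        using sl_le_iff[OF fin, of "idx P f (f p)" f "idx P f (f q)"] idxl p q by (simp add: L_def l_def)
      then show ?thesis using gp p q by simp
    qed
  qed
  moreover have "\<forall>k\<in>{1..length \<beta>}. card {p\<in>P. g p = k} = \<beta> ! (k - 1) \<and> True"
  proof
    fix k assume k: "k \<in> {1..length \<beta>}"
    then have k1: "k - 1 < l" using lenb by auto
    have "{p\<in>P. g p = k} = {p\<in>P. f p = L ! (k - 1)}"
    proof (intro Collect_cong conj_cong refl)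
      fix p assume p: "p \<in> P"
      show "g p = k \<longleftrightarrow> f p = L ! (k - 1)"
      proof
        assume "g p = k"
        then have "idx P f (f p) = k - 1" using gp[OF p] by simp
        then show "f p = L ! (k - 1)" using idxn[OF p] by simp
      next
        assume "f p = L ! (k - 1)"
        then show "g p = k" using gp[OF p] idxk[OF k1] k by simp
      qed
    qed
    then show "card {p\<in>P. g p = k} = \<beta> ! (k - 1) \<and> True" using bk[OF k1] by simp
  qed
  ultimately have gO: "g \<in> Ogen P le (\<lambda>_. True) \<beta>" unfolding Ogen_def by simp
  have "i \<in> {0..<l} \<rightarrow>\<^sub>E {1..N}"
  proof -
    have "\<forall>k\<in>{0..<l}. L ! k \<in> {1..N}" using Lk fr by force
    then show ?thesis by (auto simp: i_def)
  qed
  moreover have "strict_mono_on {0..<l} i"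
    unfolding strict_mono_on_def i_def using sl_strict[OF fin] by (simp add: L_def l_def)
  ultimately have iI: "i \<in> Iset N (length \<beta>)" by (simp add: Iset_def lenb)
  show ?thesis using fac bC gO iI by simp
qed



lemma finite_Iset: "finite (Iset N l)"
  unfolding Iset_def by (rule finite_subset[of _ "{0..<l} \<rightarrow>\<^sub>E {1..N}"]) (auto intro: finite_PiE)

lemma Mqs_Iset: "Mqs \<beta> N x = (\<Sum>i\<in>Iset N (length \<beta>). \<Prod>j<length \<beta>. x (i j) ^ (\<beta> ! j))"
  by (simp add: Mqs_def Iset_def)

lemma KP_expand:
  assumes fin: "finite P" and cP: "card P = n"
  shows "KP P le N x = (\<Sum>\<beta>\<in>compositions n. real (card (Ogen P le (\<lambda>_. True) \<beta>)) * Mqs \<beta> N x)"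
proof -
  let ?T = "SIGMA \<beta>:compositions n. Ogen P le (\<lambda>_. True) \<beta> \<times> Iset N (length \<beta>)"
  have "KP P le N x = (\<Sum>f\<in>Fset P le N. \<Prod>p\<in>P. x (f p))"
    by (simp add: KP_def Fset_def)
  also have "\<dots> = (\<Sum>a\<in>?T. \<Prod>p\<in>P. x (comp3 P a p))"
  proof (rule sum.reindex_bij_witness[where j="comp3 P" and i="fac3 P", symmetric])
    fix a assume "a \<in> ?T"
    then obtain \<beta> g i where a: "a = (\<beta>,g,i)" "\<beta> \<in> compositions n" "g \<in> Ogen P le (\<lambda>_. True) \<beta>" "i \<in> Iset N (length \<beta>)"
      by auto
    show "fac3 P (comp3 P a) = a" using fac_comp[OF fin a(3) a(4)] a(1) by simp
    show "comp3 P a \<in> Fset P le N" using comp_in[OF fin a(3) a(4)] a(1) by simp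
  next
    fix b assume b: "b \<in> Fset P le N"
    show "comp3 P (fac3 P b) = b" by (rule comp_fac[OF fin b])
    show "fac3 P b \<in> ?T" by (rule fac_in[OF fin b cP])
  qed simp
  also have "\<dots> = (\<Sum>\<beta>\<in>compositions n. \<Sum>gi\<in>Ogen P le (\<lambda>_. True) \<beta> \<times> Iset N (length \<beta>). \<Prod>p\<in>P. x (comp3 P (\<beta>, gi) p))"
    using sum.Sigma[of "compositions n" "\<lambda>\<beta>. Ogen P le (\<lambda>_. True) \<beta> \<times> Iset N (length \<beta>)"
        "\<lambda>\<beta> gi. \<Prod>p\<in>P. x (comp3 P (\<beta>, gi) p)"]
    by (simp add: finite_compositions finite_Iset fin finite_Ogen)
  also have "\<dots> = (\<Sum>\<beta>\<in>compositions n. \<Sum>g\<in>Ogen P le (\<lambda>_. True) \<beta>. \<Sum>i\<in>Iset N (length \<beta>). \<Prod>p\<in>P. x (i (g p - 1)))"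
  proof (intro sum.cong refl)
    fix \<beta> assume "\<beta> \<in> compositions n"
    have "(\<Sum>gi\<in>Ogen P le (\<lambda>_. True) \<beta> \<times> Iset N (length \<beta>). \<Prod>p\<in>P. x (comp3 P (\<beta>, gi) p))
        = (\<Sum>g\<in>Ogen P le (\<lambda>_. True) \<beta>. \<Sum>i\<in>Iset N (length \<beta>). \<Prod>p\<in>P. x (comp3 P (\<beta>, g, i) p))"
      using sum.cartesian_product[of "\<lambda>g i. \<Prod>p\<in>P. x (comp3 P (\<beta>, g, i) p)" "Iset N (length \<beta>)" "Ogen P le (\<lambda>_. True) \<beta>"]
      by simp
    also have "\<dots> = (\<Sum>g\<in>Ogen P le (\<lambda>_. True) \<beta>. \<Sum>i\<in>Iset N (length \<beta>). \<Prod>p\<in>P. x (i (g p - 1)))"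
      by (intro sum.cong prod.cong refl) (simp add: comp3_apply)
    finally show "(\<Sum>gi\<in>Ogen P le (\<lambda>_. True) \<beta> \<times> Iset N (length \<beta>). \<Prod>p\<in>P. x (comp3 P (\<beta>, gi) p))
        = (\<Sum>g\<in>Ogen P le (\<lambda>_. True) \<beta>. \<Sum>i\<in>Iset N (length \<beta>). \<Prod>p\<in>P. x (i (g p - 1)))" .
  qed
  also have "\<dots> = (\<Sum>\<beta>\<in>compositions n. \<Sum>g\<in>Ogen P le (\<lambda>_. True) \<beta>. Mqs \<beta> N x)"
  proof (intro sum.cong refl)
    fix \<beta> g assume "g \<in> Ogen P le (\<lambda>_. True) \<beta>"
    then show "(\<Sum>i\<in>Iset N (length \<beta>). \<Prod>p\<in>P. x (i (g p - 1))) = Mqs \<beta> N x"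
      unfolding Mqs_Iset using prod_fibers[OF fin] by simp
  qed
  also have "\<dots> = (\<Sum>\<beta>\<in>compositions n. real (card (Ogen P le (\<lambda>_. True) \<beta>)) * Mqs \<beta> N x)"
    by simp
  finally show ?thesis .
qed

lemma zee_pos: "\<forall>a\<in>set \<alpha>. 0 < a \<Longrightarrow> 0 < zee \<alpha>"
  unfolding zee_def by (rule prod_pos) auto

theorem theorem5p4:
  fixes P :: "'a set" and le :: "'a \<Rightarrow> 'a \<Rightarrow> bool" and n :: nat
  assumes "finite P" and "poset_on P le" and "card P = n"
  shows "\<forall>N (x :: nat \<Rightarrow> real).
           KP P le N x = (\<Sum>\<alpha>\<in>compositions n. Psi \<alpha> N x / real (zee \<alpha>) * real (card (Ostar P le \<alpha>)))"
proof (intro allI)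
  fix N and x :: "nat \<Rightarrow> real"
  have "(\<Sum>\<alpha>\<in>compositions n. Psi \<alpha> N x / real (zee \<alpha>) * real (card (Ostar P le \<alpha>)))
      = (\<Sum>\<alpha>\<in>compositions n. \<Sum>\<beta>\<in>{\<beta>\<in>compositions n. refines \<alpha> \<beta>}.
            real (card (Ogen P le (unique_min le) \<alpha>)) / real (piAB \<alpha> \<beta>) * Mqs \<beta> N x)"
  proof (intro sum.cong refl)
    fix \<alpha> assume a: "\<alpha> \<in> compositions n"
    then have z: "real (zee \<alpha>) \<noteq> 0" using zee_pos by (auto simp: compositions_def)
    have s: "sum_list \<alpha> = n" using a by (simp add: compositions_def)
    have "Psi \<alpha> N x / real (zee \<alpha>) = (\<Sum>\<beta>\<in>{\<beta>\<in>compositions n. refines \<alpha> \<beta>}. Mqs \<beta> N x / real (piAB \<alpha> \<beta>))"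
      using z s by (simp add: Psi_def)
    then show "Psi \<alpha> N x / real (zee \<alpha>) * real (card (Ostar P le \<alpha>)) = (\<Sum>\<beta>\<in>{\<beta>\<in>compositions n. refines \<alpha> \<beta>}.
            real (card (Ogen P le (unique_min le) \<alpha>)) / real (piAB \<alpha> \<beta>) * Mqs \<beta> N x)"
    proof -
      have "Psi \<alpha> N x / real (zee \<alpha>) * real (card (Ostar P le \<alpha>))
          = (\<Sum>\<beta>\<in>{\<beta>\<in>compositions n. refines \<alpha> \<beta>}. Mqs \<beta> N x / real (piAB \<alpha> \<beta>) * real (card (Ostar P le \<alpha>)))"
        using \<open>Psi \<alpha> N x / real (zee \<alpha>) = _\<close> by (simp add: sum_distrib_right)
      also have "\<dots> = (\<Sum>\<beta>\<in>{\<beta>\<in>compositions n. refines \<alpha> \<beta>}.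
            real (card (Ogen P le (unique_min le) \<alpha>)) / real (piAB \<alpha> \<beta>) * Mqs \<beta> N x)"
        by (intro sum.cong refl) (simp add: Ostar_Ogen)
      finally show ?thesis .
    qed
  qed
  also have "\<dots> = (\<Sum>\<beta>\<in>compositions n. \<Sum>\<alpha>\<in>{\<alpha>\<in>compositions n. refines \<alpha> \<beta>}.
            real (card (Ogen P le (unique_min le) \<alpha>)) / real (piAB \<alpha> \<beta>) * Mqs \<beta> N x)"
    by (rule sum.swap_restrict) (simp_all add: finite_compositions)
  also have "\<dots> = (\<Sum>\<beta>\<in>compositions n. real (card (Ogen P le (\<lambda>_. True) \<beta>)) * Mqs \<beta> N x)"
  proof (intro sum.cong refl)
    fix \<beta> assume b: "\<beta> \<in> compositions n"
    then have s: "sum_list \<beta> = n" and pb: "\<forall>a\<in>set \<beta>. 0 < a" by (auto simp: compositions_def)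
    have "(\<Sum>\<alpha>\<in>{\<alpha>\<in>compositions n. refines \<alpha> \<beta>}.
            real (card (Ogen P le (unique_min le) \<alpha>)) / real (piAB \<alpha> \<beta>) * Mqs \<beta> N x)
        = (\<Sum>\<alpha>\<in>{\<alpha>\<in>compositions n. refines \<alpha> \<beta>}.
            real (card (Ogen P le (unique_min le) \<alpha>)) / real (piAB \<alpha> \<beta>)) * Mqs \<beta> N x"
      by (simp add: sum_distrib_right)
    also have "\<dots> = real (card (Ogen P le (\<lambda>_. True) \<beta>)) * Mqs \<beta> N x"
      using main_O[OF assms(1) assms(2) pb] s by simp
    finally show "(\<Sum>\<alpha>\<in>{\<alpha>\<in>compositions n. refines \<alpha> \<beta>}.
            real (card (Ogen P le (unique_min le) \<alpha>)) / real (piAB \<alpha> \<beta>) * Mqs \<beta> N x)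
        = real (card (Ogen P le (\<lambda>_. True) \<beta>)) * Mqs \<beta> N x" .
  qed
  also have "\<dots> = KP P le N x" using KP_expand[OF assms(1) assms(3)] by simp
  finally show "KP P le N x = (\<Sum>\<alpha>\<in>compositions n. Psi \<alpha> N x / real (zee \<alpha>) * real (card (Ostar P le \<alpha>)))" by simp
qed


end
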